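(* For all integers $k\ge1$ and all $n\ge\max(4,k)$, $$\max_{\mathbf x}\Big\{\log\frac{\sup_{(\pi,P)\in\Theta^k}\mathbb P_{\pi,P}(\mathbf x)}{\mathrm{KT}_k(\mathbf x)}\Big\}\le\Big(\frac{k(k+2)}{2}-\frac12\Big)\log n+c_{k,n},$$ where the maximum is over all adjacency matrices $\mathbf x$ on $n$ nodes and $$c_{k,n}=\frac{k(k+1)}{2}\log\Gamma\big(\tfrac12\big)+\frac{k(k-1)}{4n}+\frac{1}{12n}+\log\frac{\Gamma(\frac12)}{\Gamma(\frac k2)}+\frac{7k(k+1)}{12}.$$
   Context: An adjacency matrix on $n$ nodes is a symmetric $\mathbf{x}\in\{0,1\}^{n\times n}$ with zero diagonal. For $k\ge1$ let $\Theta^k=\{(\pi,P):\pi\in(0,1]^k,\ \sum_{a=1}^k\pi_a=1,\ P\in[0,1]^{k\times k}\text{ symmetric}\}$ and $[k]=\{1,\dots,k\}$. For $(\pi,P)\in\Theta^k$ and $\mathbf z_n\in[k]^n$, $\mathbb P_{\pi,P}(\mathbf z_n,\mathbf x)=\prod_{a=1}^k\pi_a^{n_a}\prod_{a,b=1}^kP_{a,b}^{O_{a,b}/2}(1-P_{a,b})^{(n_{a,b}-O_{a,b})/2}$ (with $0^0=1$), where $n_a=\sum_i 1\{z_i=a\}$, $n_{a,b}=n_an_b$ for $a\ne b$, $n_{a,a}=n_a(n_a-1)$, $O_{a,b}=\sum_{i,j=1}^n1\{z_i=a,z_j=b\}x_{ij}$; and $\mathbb P_{\pi,P}(\mathbf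 x)=\sum_{\mathbf z_n\in[k]^n}\mathbb P_{\pi,P}(\mathbf z_n,\mathbf x)$. The KT prior on $\Theta^k$ is $\nu_k(\pi,P)=\Big[\frac{\Gamma(k/2)}{\Gamma(1/2)^k}\prod_{a=1}^k\pi_a^{-1/2}\Big]\Big[\prod_{1\le a\le b\le k}\frac{1}{\Gamma(1/2)^2}P_{a,b}^{-1/2}(1-P_{a,b})^{-1/2}\Big]$, and $\mathrm{KT}_k(\mathbf x)=\int_{\Theta^k}\mathbb P_{\pi,P}(\mathbf x)\nu_k(\pi,P)\,d\pi\,dP$. *)

theory Defs
  imports "HOL-Analysis.Analysis"
begin

text \<open>Nodes are 0..<n, communities (labels) are 0..<k (i.e. [k] shifted by one).\<close>

definition rpow0 :: "real \<Rightarrow> real \<Rightarrow> real" where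
  "rpow0 y e = (if y = 0 then (if e = 0 then 1 else 0) else y powr e)"

definition adjacency :: "nat \<Rightarrow> (nat \<Rightarrow> nat \<Rightarrow> bool) \<Rightarrow> bool" where
  "adjacency n x \<longleftrightarrow> (\<forall>i<n. \<forall>j<n. x i j = x j i) \<and> (\<forall>i<n. \<not> x i i)"

definition Theta :: "nat \<Rightarrow> ((nat \<Rightarrow> real) \<times> (nat \<Rightarrow> nat \<Rightarrow> real)) set" where
  "Theta k = {(\<pi>, P). (\<forall>a<k. 0 < \<pi> a \<and> \<pi> a \<le> 1) \<and> (\<Sum>a<k. \<pi> a) = 1 \<and>
      (\<forall>a<k. \<forall>b<k. 0 \<le> P a b \<and> P a b \<le> 1 \<and> P a b = P b a)}"

definition cnt :: "nat \<Rightarrow> (nat \<Rightarrow> nat) \<Rightarrow> nat \<Rightarrow> nat" where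
  "cnt n z a = card {i. i < n \<and> z i = a}"

definition npairs :: "nat \<Rightarrow> (nat \<Rightarrow> nat) \<Rightarrow> nat \<Rightarrow> nat \<Rightarrow> nat" where
  "npairs n z a b = (if a \<noteq> b then cnt n z a * cnt n z b else cnt n z a * (cnt n z a - 1))"

definition Ocnt :: "nat \<Rightarrow> (nat \<Rightarrow> nat) \<Rightarrow> (nat \<Rightarrow> nat \<Rightarrow> bool) \<Rightarrow> nat \<Rightarrow> nat \<Rightarrow> nat" where
  "Ocnt n z x a b = (\<Sum>i<n. \<Sum>j<n. of_bool (z i = a \<and> z j = b \<and> x i j))"

definition prob_zx :: "nat \<Rightarrow> nat \<Rightarrow> (nat \<Rightarrow> real) \<Rightarrow> (nat \<Rightarrow> nat \<Rightarrow> real) \<Rightarrow>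
    (nat \<Rightarrow> nat) \<Rightarrow> (nat \<Rightarrow> nat \<Rightarrow> bool) \<Rightarrow> real" where
  "prob_zx k n \<pi> P z x =
     (\<Prod>a<k. \<pi> a ^ cnt n z a) *
     (\<Prod>a<k. \<Prod>b<k. rpow0 (P a b) (real (Ocnt n z x a b) / 2) *
        rpow0 (1 - P a b) ((real (npairs n z a b) - real (Ocnt n z x a b)) / 2))"

definition prob_x :: "nat \<Rightarrow> nat \<Rightarrow> (nat \<Rightarrow> real) \<Rightarrow> (nat \<Rightarrow> nat \<Rightarrow> real) \<Rightarrow>
    (nat \<Rightarrow> nat \<Rightarrow> bool) \<Rightarrow> real" where
  "prob_x k n \<pi> P x = (\<Sum>z\<in>({..<n} \<rightarrow>\<^sub>E {..<k}). prob_zx k n \<pi> P z x)"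

definition KT_prior :: "nat \<Rightarrow> (nat \<Rightarrow> real) \<Rightarrow> (nat \<Rightarrow> nat \<Rightarrow> real) \<Rightarrow> real" where
  "KT_prior k \<pi> P =
     (Gamma (real k / 2) / Gamma (1/2) ^ k * (\<Prod>a<k. \<pi> a powr (-1/2))) *
     (\<Prod>(a,b)\<in>{(a,b). a \<le> b \<and> b < k}.
        1 / Gamma (1/2) ^ 2 * P a b powr (-1/2) * (1 - P a b) powr (-1/2))"

text \<open>Integration over Theta^k: pi is parametrised by its first k-1 coordinates
  (Lebesgue measure on them, pi_(k-1) = 1 - sum of the others), and the symmetric P by
  its entries P(a,b), a \<le> b (Lebesgue measure on each).\<close>
definition pi_of :: "nat \<Rightarrow> (nat \<Rightarrow> real) \<Rightarrow> nat \<Rightarrow> real" where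
  "pi_of k u a = (if a + 1 < k then u a else 1 - (\<Sum>c<k - 1. u c))"

definition P_of :: "((nat \<times> nat) \<Rightarrow> real) \<Rightarrow> nat \<Rightarrow> nat \<Rightarrow> real" where
  "P_of q a b = q (min a b, max a b)"

definition KT :: "nat \<Rightarrow> nat \<Rightarrow> (nat \<Rightarrow> nat \<Rightarrow> bool) \<Rightarrow> real" where
  "KT k n x = enn2real (\<integral>\<^sup>+ w.
      ennreal (indicator (Theta k) (pi_of k (fst w), P_of (snd w)) *
               prob_x k n (pi_of k (fst w)) (P_of (snd w)) x *
               KT_prior k (pi_of k (fst w)) (P_of (snd w)))
      \<partial>(PiM {..<k - 1} (\<lambda>_. lborel) \<Otimes>\<^sub>M PiM {(a,b). a \<le> b \<and> b < k} (\<lambda>_. lborel)))"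

definition MaxLik :: "nat \<Rightarrow> nat \<Rightarrow> (nat \<Rightarrow> nat \<Rightarrow> bool) \<Rightarrow> real" where
  "MaxLik k n x = Sup {prob_x k n \<pi> P x | \<pi> P. (\<pi>, P) \<in> Theta k}"

definition c_const :: "nat \<Rightarrow> nat \<Rightarrow> real" where
  "c_const k n = real (k * (k + 1)) / 2 * ln (Gamma (1/2)) + real (k * (k - 1)) / (4 * real n)
     + 1 / (12 * real n) + ln (Gamma (1/2) / Gamma (real k / 2)) + 7 * real (k * (k + 1)) / 12"

end

theory Submission
  imports Defs
begin

lemma ln_ineq1:
  fixes x :: real assumes "x \<ge> 0"
  shows "ln (1 + x) \<le> x + x * ln ((2 + x) / (2 + 2 * x))"
proof -
  define F where "F t = t + t * ln (2 + t) - t * ln (2 + 2 * t) - ln (1 + t)" for t :: real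
  have d: "(F has_real_derivative (ln ((2 + t) / (2 + 2 * t)) + t / (2 + t))) (at t)"
    if "t \<in> {0..x}" for t
  proof -
    have t: "t \<ge> 0" using that by auto
    have d0: "(F has_real_derivative (1 + (ln (2 + t) + t * (1 / (2 + t))) - (ln (2 + 2 * t) + t * (2 / (2 + 2 * t))) - 1 / (1 + t))) (at t)"
      unfolding F_def using t
      by (auto intro!: derivative_eq_intros)
    have eq: "1 + (ln (2 + t) + t * (1 / (2 + t))) - (ln (2 + 2 * t) + t * (2 / (2 + 2 * t))) - 1 / (1 + t)
        = ln ((2 + t) / (2 + 2 * t)) + t / (2 + t)"
    proof -
      have e1: "ln ((2+t)/(2+2*t)) = ln(2+t) - ln(2+2*t)" using t by (simp add: ln_div)
      have p: "2+t > 0" "1+t>0" "2+2*t > 0" using t by auto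
      have e2: "t * (1/(2+t)) - t*(2/(2+2*t)) - 1/(1+t) + 1 = t/(2+t)"
      proof -
        have a: "t*(2/(2+2*t)) = t/(1+t)" using p by (simp add: field_simps)
        have b: "t/(1+t) + 1/(1+t) = 1" using p by (simp add: add_divide_distrib[symmetric])
        show ?thesis using a b by simp
      qed
      show ?thesis using e1 e2 by linarith
    qed
    show ?thesis using d0 unfolding eq .
  qed
  have nn: "0 \<le> ln ((2 + t) / (2 + 2 * t)) + t / (2 + t)" if "t \<in> {0..x}" for t
  proof -
    have t: "t \<ge> 0" using that by auto
    have "ln ((2 + 2 * t) / (2 + t)) \<le> (2 + 2 * t) / (2 + t) - 1"
      using t by (intro ln_le_minus_one) auto
    moreover have "(2 + 2 * t) / (2 + t) - 1 = t / (2 + t)" using t by (simp add: field_simps)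
    moreover have "ln ((2 + t) / (2 + 2 * t)) = - ln ((2 + 2 * t) / (2 + t))"
      using t by (simp add: ln_div)
    ultimately show ?thesis by linarith
  qed
  have "F 0 \<le> F x" by (rule deriv_nonneg_imp_mono[OF d nn]) (use assms in auto)
  moreover have "F 0 = 0" by (simp add: F_def)
  moreover have "x * ln ((2 + x) / (2 + 2 * x)) = x * ln (2 + x) - x * ln (2 + 2 * x)"
    using assms by (simp add: ln_div algebra_simps)
  ultimately show ?thesis unfolding F_def by linarith
qed

lemma ln_ineq2:
  fixes x :: real assumes "x \<ge> 0"
  shows "2 * x / (2 + x) \<le> ln (1 + x)"
proof -
  define H where "H t = ln (1 + t) - 2 * t / (2 + t)" for t :: real
  have d: "(H has_real_derivative (1 / (1 + t) - 4 / (2 + t)^2)) (at t)" if "t \<in> {0..x}" for t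
  proof -
    have t: "t \<ge> 0" using that by auto
    have "(H has_real_derivative (1 / (1 + t) - (2 * (2 + t) - 2 * t) / (2 + t)^2)) (at t)"
      unfolding H_def using t
      by (auto intro!: derivative_eq_intros simp: power2_eq_square)
    thus ?thesis by simp
  qed
  have nn: "0 \<le> 1 / (1 + t) - 4 / (2 + t)^2" if "t \<in> {0..x}" for t
  proof -
    have t: "t \<ge> 0" using that by auto
    have "4 / (2 + t)^2 \<le> 1 / (1 + t)"
    proof -
      have "4*(1+t) \<le> (2+t)^2" using t by (simp add: power2_eq_square algebra_simps)
      moreover have "(2+t)^2 > 0" "1 + t > 0" using t by auto
      ultimately show ?thesis by (simp add: field_simps)
    qed
    thus ?thesis by simp
  qed
  have "H 0 \<le> H x" by (rule deriv_nonneg_imp_mono[OF d nn]) (use assms in auto)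
  thus ?thesis by (simp add: H_def)
qed


lemma pos_not_nonpos_Int: "(z::real) > 0 \<Longrightarrow> z \<notin> \<int>\<^sub>\<le>\<^sub>0"
  by (auto elim!: nonpos_Ints_cases)

lemma key_G1:
  fixes m :: nat
  shows "(real m + 1) ^ (m + 1) \<le> exp 1 * (real m + 1/2) * real m ^ m"
proof (cases "m = 0")
  case True
  have "exp (1::real) \<ge> 2" using exp_ge_add_one_self[of 1] by simp
  thus ?thesis using True by simp
next
  case False
  hence m: "real m \<ge> 1" by simp
  define x where "x = 1 / real m"
  have x: "x \<ge> 0" using m by (simp add: x_def)
  have "ln (1 + x) \<le> x + x * ln ((2 + x) / (2 + 2 * x))" by (rule ln_ineq1[OF x])
  moreover have "(2 + x) / (2 + 2 * x) = (2 * real m + 1) / (2 * real m + 2)"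
  proof -
    have a: "2 + x = (2 * real m + 1) / real m" using m by (simp add: x_def field_simps)
    have b: "2 + 2 * x = (2 * real m + 2) / real m" using m by (simp add: x_def field_simps)
    show ?thesis unfolding a b using m by simp
  qed
  ultimately have "real m * ln (1 + x) \<le> real m * (x + x * ln ((2 * real m + 1) / (2 * real m + 2)))"
    using m by (intro mult_left_mono) auto
  also have "\<dots> = 1 + ln ((2 * real m + 1) / (2 * real m + 2))"
    using m by (simp add: x_def field_simps)
  finally have "exp (real m * ln (1 + x)) \<le> exp (1 + ln ((2 * real m + 1) / (2 * real m + 2)))"
    by simp
  also have "exp (real m * ln (1 + x)) = (1 + x) ^ m"
    using x by (simp add: exp_of_nat_mult[symmetric] ln_realpow[symmetric] add_pos_nonneg)
  also have "exp (1 + ln ((2 * real m + 1) / (2 * real m + 2))) = exp 1 * ((2 * real m + 1) / (2 * real m + 2))"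
    using m by (simp add: exp_add)
  also have "(1 + x) ^ m = (real m + 1) ^ m / real m ^ m"
    using m by (simp add: x_def field_simps power_divide)
  finally have h: "(real m + 1) ^ m \<le> exp 1 * ((2 * real m + 1) / (2 * real m + 2)) * real m ^ m"
    using m by (simp add: field_simps)
  have "(real m + 1) ^ (m + 1) = (real m + 1) * (real m + 1) ^ m" by simp
  also have "\<dots> \<le> (real m + 1) * (exp 1 * ((2 * real m + 1) / (2 * real m + 2)) * real m ^ m)"
    using h by (intro mult_left_mono) auto
  also have "\<dots> = exp 1 * (real m + 1/2) * real m ^ m"
    using m by (simp add: field_simps)
  finally show ?thesis .
qed

lemma G1: "sqrt pi * (real m / exp 1) ^ m \<le> Gamma (real m + 1/2)"
proof (induction m)
  case 0
  then show ?case by (simp add: Gamma_one_half_real)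
next
  case (Suc m)
  have g: "Gamma (real (Suc m) + 1/2) = (real m + 1/2) * Gamma (real m + 1/2)"
  proof -
    have "Gamma (real m + 1/2 + 1) = (real m + 1/2) * Gamma (real m + 1/2)"
      by (rule Gamma_plus1) (rule pos_not_nonpos_Int, simp add: add_nonneg_pos)
    moreover have "real (Suc m) + 1/2 = real m + 1/2 + 1" by simp
    ultimately show ?thesis by simp
  qed
  have "sqrt pi * (real (Suc m) / exp 1) ^ Suc m = sqrt pi * (real m + 1) ^ (m + 1) / exp 1 ^ (m+1)"
    by (simp add: power_divide add.commute)
  also have "\<dots> \<le> sqrt pi * (exp 1 * (real m + 1/2) * real m ^ m) / exp 1 ^ (m+1)"
    by (intro divide_right_mono mult_left_mono key_G1) auto
  also have "\<dots> = (real m + 1/2) * (sqrt pi * (real m / exp 1) ^ m)"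
    by (simp add: power_divide field_simps)
  also have "\<dots> \<le> (real m + 1/2) * Gamma (real m + 1/2)"
    using Suc.IH by (intro mult_left_mono) auto
  finally show ?case using g by (simp add: add.commute)
qed

lemma key_G2:
  fixes m :: nat assumes "m \<ge> 1"
  shows "exp 1 \<le> (1 + 1 / real m) powr (real m + 1/2)"
proof -
  have m: "real m \<ge> 1" using assms by simp
  define x where "x = 1 / real m"
  have x: "x > 0" using m by (simp add: x_def)
  have "2 * x / (2 + x) \<le> ln (1 + x)" by (rule ln_ineq2) (use x in auto)
  hence "(real m + 1/2) * (2 * x / (2 + x)) \<le> (real m + 1/2) * ln (1 + x)"
    using m by (intro mult_left_mono) auto
  moreover have "(real m + 1/2) * (2 * x / (2 + x)) = 1"
    using m by (simp add: x_def field_simps)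
  ultimately have "1 \<le> (real m + 1/2) * ln (1 + x)" by linarith
  hence "exp 1 \<le> exp ((real m + 1/2) * ln (1 + x))" by simp
  also have "\<dots> = (1 + x) powr (real m + 1/2)" using x by (simp add: powr_def)
  finally show ?thesis by (simp add: x_def)
qed

lemma G2:
  fixes m :: nat assumes "m \<ge> 1"
  shows "fact m \<le> exp 1 * sqrt (real m) * (real m / exp 1) ^ m"
  using assms
proof (induction m rule: nat_induct_at_least)
  case base
  then show ?case by simp
next
  case (Suc m)
  have m: "real m \<ge> 1" using Suc by simp
  have "fact (Suc m) = (real m + 1) * fact m" by simp
  also have "\<dots> \<le> (real m + 1) * (exp 1 * sqrt (real m) * (real m / exp 1) ^ m)"
    using Suc.IH by (intro mult_left_mono) auto
  also have "\<dots> \<le> exp 1 * sqrt (real (Suc m)) * (real (Suc m) / exp 1) ^ Suc m"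
  proof -
    have k: "exp 1 \<le> (1 + 1 / real m) powr (real m + 1/2)" by (rule key_G2) (use Suc in auto)
    have "(1 + 1 / real m) powr (real m + 1/2) = ((real m + 1) / real m) powr (real m + 1/2)"
      using m by (simp add: field_simps)
    also have "\<dots> = (real m + 1) powr (real m + 1/2) / real m powr (real m + 1/2)"
      using m by (simp add: powr_divide)
    also have "(real m + 1) powr (real m + 1/2) = (real m + 1) ^ m * sqrt (real m + 1)"
      using m by (simp add: powr_add powr_realpow powr_half_sqrt)
    also have "real m powr (real m + 1/2) = real m ^ m * sqrt (real m)"
      using m by (simp add: powr_add powr_realpow powr_half_sqrt)
    finally have k1: "exp 1 \<le> (real m + 1) ^ m * sqrt (real m + 1) / (real m ^ m * sqrt (real m))"
      using k by simp
    have pos: "real m ^ m * sqrt (real m) > 0" using m by simp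
    have k2: "exp 1 * (real m ^ m * sqrt (real m)) \<le> (real m + 1) ^ m * sqrt (real m + 1)"
      using k1 pos by (simp add: pos_le_divide_eq)
    have "(real m + 1) * (exp 1 * sqrt (real m) * (real m / exp 1) ^ m)
        = (exp 1 * (real m ^ m * sqrt (real m))) * (real m + 1) / exp 1 ^ m"
      by (simp add: power_divide field_simps)
    also have "\<dots> \<le> ((real m + 1) ^ m * sqrt (real m + 1)) * (real m + 1) / exp 1 ^ m"
      using k2 m by (intro divide_right_mono mult_right_mono) auto
    also have "\<dots> = exp 1 * sqrt (real (Suc m)) * (real (Suc m) / exp 1) ^ Suc m"
      by (simp add: power_divide field_simps add.commute)
    finally show ?thesis .
  qed
  finally show ?case .
qed


lemma G3_base:
  fixes n :: nat assumes "n \<ge> 1"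
  shows "Gamma (real n + 1/2) \<le> fact n / sqrt (real n)"
proof -
  have n: "real n \<ge> 1" using assms by simp
  have c: "(ln \<circ> Gamma) ((1 - 1/2) *\<^sub>R real n + (1/2) *\<^sub>R (real n + 1))
      \<le> (1 - 1/2) * (ln \<circ> Gamma) (real n) + (1/2) * (ln \<circ> Gamma) (real n + 1)"
    by (rule convex_onD[OF log_convex_Gamma_real]) (use n in auto)
  have e: "(1 - 1/2) *\<^sub>R real n + (1/2) *\<^sub>R (real n + 1) = real n + 1/2" by (simp add: field_simps)
  have g1: "Gamma (real n + 1) = fact n" using Gamma_fact[of n] by (simp add: add.commute)
  have g0: "Gamma (real n) = fact n / real n"
  proof -
    have "Gamma (real n + 1) = real n * Gamma (real n)"
      by (rule Gamma_plus1) (rule pos_not_nonpos_Int, use n in simp)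
    thus ?thesis using g1 n by (simp add: field_simps)
  qed
  have pos: "Gamma (real n) > 0" "Gamma (real n + 1) > 0" "Gamma (real n + 1/2) > 0"
    using n by (auto intro!: Gamma_real_pos)
  from c have "ln (Gamma (real n + 1/2)) \<le> (ln (Gamma (real n)) + ln (Gamma (real n + 1))) / 2"
    unfolding e by simp
  hence "Gamma (real n + 1/2) \<le> exp ((ln (Gamma (real n)) + ln (Gamma (real n + 1))) / 2)"
    using pos by (metis exp_le_cancel_iff exp_ln)
  also have "exp ((ln (Gamma (real n)) + ln (Gamma (real n + 1))) / 2) = sqrt (Gamma (real n) * Gamma (real n + 1))"
  proof -
    have "(Gamma (real n) * Gamma (real n + 1)) powr (1/2) = exp ((ln (Gamma (real n)) + ln (Gamma (real n + 1))) / 2)"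
      using pos(1) pos(2)[THEN less_imp_neq] by (auto simp add: powr_def ln_mult)
    thus ?thesis using pos by (simp add: powr_half_sqrt)
  qed
  also have "\<dots> = fact n / sqrt (real n)"
    using n unfolding g0 g1 by (simp add: real_sqrt_divide real_sqrt_mult power2_eq_square[symmetric])
  finally show ?thesis .
qed

lemma powr_m_half: "real n powr (- (1/2)) = inverse (sqrt (real n))"
  by (simp add: powr_minus powr_half_sqrt)


lemma G3_base': "1 \<le> n \<Longrightarrow> Gamma (real n + 1/2) \<le> fact n * real n powr (- (1/2))"
  unfolding powr_m_half divide_inverse[symmetric] by (rule G3_base)

lemma G3:
  fixes n k :: nat assumes "n \<ge> 1" "k \<ge> 1"
  shows "Gamma (real n + real k / 2) \<le> fact n * real n powr (real k / 2 - 1) * exp (real k * (real k - 1) / (4 * real n))"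
  using assms(2)
proof (induction k rule: less_induct)
  case (less k)
  have n: "real n \<ge> 1" using assms by simp
  consider "k = 1" | "k = 2" | "k \<ge> 3" using less.prems by linarith
  then show ?case
  proof cases
    case 1
    have ee: "real n + real k / 2 = real n + 1/2" using 1 by simp
    have e: "real k / 2 - 1 = - (1/2)" using 1 by simp
    have h: "Gamma (real n + real k / 2) \<le> fact n * real n powr (real k / 2 - 1)"
      unfolding ee e by (rule G3_base'[OF assms(1)])
    have ex: "exp (real k * (real k - 1) / (4 * real n)) = 1" using 1 by simp
    show ?thesis using h unfolding ex mult_1_right .
  next
    case 2
    have ee: "real n + real k / 2 = 1 + real n" using 2 by simp
    have g: "Gamma (real n + real k / 2) = fact n" unfolding ee by (rule Gamma_fact)
    have e0: "real k / 2 - 1 = 0" using 2 by simp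
    have pw: "real n powr (real k / 2 - 1) = 1" unfolding e0 using n by simp
    have ex0: "real k * (real k - 1) / (4 * real n) \<ge> 0" using 2 n by simp
    have ex: "exp (real k * (real k - 1) / (4 * real n)) \<ge> 1" using ex0 by simp
    have "fact n * 1 \<le> fact n * exp (real k * (real k - 1) / (4 * real n))"
      using ex by (intro mult_left_mono) auto
    thus ?thesis unfolding g pw by simp
  next
    case 3
    define j where "j = k - 2"
    have j: "k = j + 2" "j \<ge> 1" "j < k" using 3 by (auto simp: j_def)
    have IH: "Gamma (real n + real j / 2) \<le> fact n * real n powr (real j / 2 - 1) * exp (real j * (real j - 1) / (4 * real n))"
      using less.IH[OF j(3) j(2)] .
    have g: "Gamma (real n + real k / 2) = (real n + real j / 2) * Gamma (real n + real j / 2)"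
    proof -
      have eqk: "real n + real k / 2 = real n + real j / 2 + 1" using j by (simp add: field_simps)
      show ?thesis unfolding eqk
        by (rule Gamma_plus1) (rule pos_not_nonpos_Int, use n in simp)
    qed
    have a: "real n + real j / 2 \<le> real n * exp (real j / (2 * real n))"
    proof -
      have "1 + real j / (2 * real n) \<le> exp (real j / (2 * real n))" by (rule exp_ge_add_one_self)
      hence "real n * (1 + real j / (2 * real n)) \<le> real n * exp (real j / (2 * real n))"
        using n by (intro mult_left_mono) auto
      moreover have "real n * (1 + real j / (2 * real n)) = real n + real j / 2"
        using n by (simp add: field_simps)
      ultimately show ?thesis by linarith
    qed
    have "Gamma (real n + real k / 2) \<le> (real n * exp (real j / (2 * real n))) *
           (fact n * real n powr (real j / 2 - 1) * exp (real j * (real j - 1) / (4 * real n)))"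
      unfolding g
    proof (rule mult_mono[OF a IH])
      show "0 \<le> real n * exp (real j / (2 * real n))" using n by simp
      show "0 \<le> Gamma (real n + real j / 2)" using n by (intro less_imp_le Gamma_real_pos) simp
    qed
    also have "\<dots> = fact n * (real n * real n powr (real j / 2 - 1)) *
         exp (real j / (2 * real n) + real j * (real j - 1) / (4 * real n))"
      by (simp add: exp_add mult_ac)
    also have "real n * real n powr (real j / 2 - 1) = real n powr (real k / 2 - 1)"
    proof -
      have p1: "real n powr (1 + (real j / 2 - 1)) = real n powr 1 * real n powr (real j / 2 - 1)"
        by (rule powr_add)
      have p2: "real n powr 1 = real n" using n by simp
      have "real n * real n powr (real j / 2 - 1) = real n powr (1 + (real j / 2 - 1))"
        unfolding p1 p2 ..
      moreover have "1 + (real j / 2 - 1) = real k / 2 - 1" using j by (simp add: field_simps)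
      ultimately show ?thesis by simp
    qed
    finally have h: "Gamma (real n + real k / 2) \<le> fact n * real n powr (real k / 2 - 1) *
         exp (real j / (2 * real n) + real j * (real j - 1) / (4 * real n))" .
    have ee: "exp (real j / (2 * real n) + real j * (real j - 1) / (4 * real n))
        \<le> exp (real k * (real k - 1) / (4 * real n))"
    proof -
      have "real j / (2 * real n) + real j * (real j - 1) / (4 * real n) = (real j * real j + real j) / (4 * real n)"
        using n by (simp add: field_simps)
      also have "\<dots> \<le> (real k * (real k - 1)) / (4 * real n)"
      proof (intro divide_right_mono)
        have "real k = real j + 2" using j by simp
        thus "real j * real j + real j \<le> real k * (real k - 1)" by (simp add: algebra_simps)
      qed (use n in auto)
      finally show ?thesis by simp
    qed
    have c0: "0 \<le> fact n * real n powr (real k / 2 - 1)" by simp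
    show ?thesis using order_trans[OF h mult_left_mono[OF ee c0]] .
  qed
qed


lemma pow_le_exp: "(x::real) \<ge> 0 \<Longrightarrow> x ^ w \<le> exp (real w * (x - 1))"
proof -
  assume x: "x \<ge> 0"
  have "x \<le> exp (x - 1)" using exp_ge_add_one_self[of "x - 1"] by simp
  hence "x ^ w \<le> exp (x - 1) ^ w" using x by (intro power_mono) auto
  also have "\<dots> = exp (real w * (x - 1))" by (simp add: exp_of_nat_mult)
  finally show ?thesis .
qed

lemma gibbs:
  fixes I :: "'a set" and w :: "'a \<Rightarrow> nat" and p :: "'a \<Rightarrow> real"
  assumes fin: "finite I" and p0: "\<And>i. i \<in> I \<Longrightarrow> p i \<ge> 0" and ps: "(\<Sum>i\<in>I. p i) \<le> 1"
  shows "(\<Prod>i\<in>I. p i ^ w i) \<le> (\<Prod>i\<in>I. (real (w i) / real (\<Sum>j\<in>I. w j)) ^ w i)"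
proof -
  define W where "W = (\<Sum>j\<in>I. w j)"
  define J where "J = {i\<in>I. w i > 0}"
  have JI: "J \<subseteq> I" and finJ: "finite J" using fin by (auto simp: J_def)
  have red: "(\<Prod>i\<in>I. f i ^ w i) = (\<Prod>i\<in>J. f i ^ w i)" for f :: "'a \<Rightarrow> real"
    by (rule prod.mono_neutral_right[OF fin JI]) (auto simp: J_def)
  show ?thesis
  proof (cases "\<exists>i\<in>J. p i = 0")
    case True
    then obtain i where i: "i \<in> J" "p i = 0" by blast
    have "(\<Prod>i\<in>J. p i ^ w i) = 0"
      using i finJ by (intro prod_zero) (auto simp: J_def intro!: bexI[of _ i])
    moreover have "0 \<le> (\<Prod>i\<in>J. (real (w i) / real W) ^ w i)" by (intro prod_nonneg) auto
    ultimately show ?thesis unfolding red W_def[symmetric] by simp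
  next
    case False
    hence pp: "\<And>i. i \<in> J \<Longrightarrow> p i > 0" using p0 JI by force
    show ?thesis
    proof (cases "J = {}")
      case True thus ?thesis unfolding red by simp
    next
      case False
      then obtain i0 where "i0 \<in> J" by blast
      have Wpos: "W > 0"
      proof -
        have "w i0 \<le> W" unfolding W_def using fin \<open>i0 \<in> J\<close> JI by (intro member_le_sum) auto
        thus ?thesis using \<open>i0 \<in> J\<close> by (auto simp: J_def)
      qed
      have WJ: "W = (\<Sum>j\<in>J. w j)" unfolding W_def
        by (rule sum.mono_neutral_right[OF fin JI]) (auto simp: J_def)
      have wpos: "\<And>i. i \<in> J \<Longrightarrow> w i > 0" by (auto simp: J_def)
      have split: "p i ^ w i = (real (w i) / real W) ^ w i * (p i * real W / real (w i)) ^ w i" if "i \<in> J" for i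
        using wpos[OF that] Wpos by (simp add: power_mult_distrib[symmetric])
      have eqP: "(\<Prod>i\<in>J. p i ^ w i) = (\<Prod>i\<in>J. (real (w i) / real W) ^ w i) * (\<Prod>i\<in>J. (p i * real W / real (w i)) ^ w i)"
        by (simp add: split prod.distrib[symmetric] cong: prod.cong)
      have "(\<Prod>i\<in>J. (p i * real W / real (w i)) ^ w i) \<le> (\<Prod>i\<in>J. exp (real (w i) * (p i * real W / real (w i) - 1)))"
        using pp Wpos wpos by (intro prod_mono conjI pow_le_exp zero_le_power divide_nonneg_nonneg mult_nonneg_nonneg less_imp_le) auto
      also have "\<dots> = exp (\<Sum>i\<in>J. real (w i) * (p i * real W / real (w i) - 1))"
        by (simp add: exp_sum finJ)
      also have "(\<Sum>i\<in>J. real (w i) * (p i * real W / real (w i) - 1)) = real W * (\<Sum>i\<in>J. p i) - real W"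
      proof -
        have "(\<Sum>i\<in>J. real (w i) * (p i * real W / real (w i) - 1)) = (\<Sum>i\<in>J. p i * real W - real (w i))"
          using wpos by (intro sum.cong) (force simp: field_simps)+
        also have "\<dots> = real W * (\<Sum>i\<in>J. p i) - real W"
        proof -
          have "(\<Sum>i\<in>J. p i * real W - real (w i)) = (\<Sum>i\<in>J. p i) * real W - (\<Sum>i\<in>J. real (w i))"
            by (simp add: sum_subtractf sum_distrib_right)
          moreover have "(\<Sum>i\<in>J. real (w i)) = real W" unfolding WJ by simp
          ultimately show ?thesis by (simp add: mult.commute)
        qed
        finally show ?thesis .
      qed
      also have "\<dots> \<le> 0"
      proof -
        have "(\<Sum>i\<in>J. p i) \<le> (\<Sum>i\<in>I. p i)" using p0 fin JI by (intro sum_mono2) auto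
        hence "(\<Sum>i\<in>J. p i) \<le> 1" using ps by simp
        thus ?thesis using Wpos by (simp add: mult_left_le)
      qed
      finally have Q1: "(\<Prod>i\<in>J. (p i * real W / real (w i)) ^ w i) \<le> 1" by simp
      have C0: "0 \<le> (\<Prod>i\<in>J. (real (w i) / real W) ^ w i)" by (intro prod_nonneg) auto
      have "(\<Prod>i\<in>J. p i ^ w i) \<le> (\<Prod>i\<in>J. (real (w i) / real W) ^ w i) * 1"
        unfolding eqP by (rule mult_left_mono[OF Q1 C0])
      thus ?thesis unfolding red W_def[symmetric] by simp
    qed
  qed
qed


lemma pow_ratio_id:
  fixes a b :: nat and E :: real assumes E: "E > 0" and T: "a + b > 0"
  shows "(real a / real (a + b)) ^ a * (real b / real (a + b)) ^ b
       = ((real a / E) ^ a * (real b / E) ^ b) / (real (a + b) / E) ^ (a + b)"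
proof -
  have t: "real (a + b) > 0" using T by linarith
  have "((real a / E) ^ a * (real b / E) ^ b) / (real (a + b) / E) ^ (a + b)
      = (real a ^ a * real b ^ b / E ^ (a + b)) / (real (a + b) ^ (a + b) / E ^ (a + b))"
    by (simp add: power_divide power_add)
  also have "\<dots> = real a ^ a * real b ^ b / real (a + b) ^ (a + b)"
    using E t by (simp add: field_simps)
  also have "\<dots> = (real a / real (a + b)) ^ a * (real b / real (a + b)) ^ b"
    by (simp add: power_divide power_add)
  finally show ?thesis by simp
qed

lemma pair_bound:
  fixes a b n :: nat assumes n: "n \<ge> 1" and T: "a + b \<le> n ^ 2"
  shows "(real a / real (a + b)) ^ a * (real b / real (a + b)) ^ b
         \<le> exp 1 * real n * (Beta (real a + 1/2) (real b + 1/2) / pi)"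
proof (cases "a + b = 0")
  case True
  hence ab: "a = 0" "b = 0" by auto
  have "Beta (real a + 1/2) (real b + 1/2) = pi"
    using ab by (simp add: Beta_def Gamma_one_half_real)
  moreover have "exp 1 * real n \<ge> 1"
  proof -
    have "exp (1::real) \<ge> 1" by simp
    moreover have "real n \<ge> 1" using n by simp
    ultimately show ?thesis using mult_mono[of 1 "exp 1" 1 "real n"] by simp
  qed
  ultimately show ?thesis using ab by simp
next
  case False
  define T where "T = a + b"
  define E :: real where "E = exp 1"
  have E: "E > 0" by (simp add: E_def)
  have Tp: "T \<ge> 1" using False unfolding T_def by linarith
  have g1: "sqrt pi * (real a / E) ^ a \<le> Gamma (real a + 1/2)" unfolding E_def by (rule G1)
  have g2: "sqrt pi * (real b / E) ^ b \<le> Gamma (real b + 1/2)" unfolding E_def by (rule G1)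
  have gT: "Gamma (real a + 1/2 + (real b + 1/2)) = fact T"
  proof -
    have "real a + 1/2 + (real b + 1/2) = 1 + real T" by (simp add: T_def)
    thus ?thesis by (simp add: Gamma_fact)
  qed
  have fT: "fact T \<le> E * sqrt (real T) * (real T / E) ^ T" unfolding E_def by (rule G2[OF Tp])
  have pos1: "0 \<le> sqrt pi * (real a / E) ^ a" "0 \<le> sqrt pi * (real b / E) ^ b" using E by auto
  have prodG: "pi * ((real a / E) ^ a * (real b / E) ^ b) \<le> Gamma (real a + 1/2) * Gamma (real b + 1/2)"
  proof -
    have "(sqrt pi * (real a / E) ^ a) * (sqrt pi * (real b / E) ^ b) \<le> Gamma (real a + 1/2) * Gamma (real b + 1/2)"
      by (rule mult_mono[OF g1 g2 _ pos1(2)]) (use pos1 g1 in linarith)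
    moreover have "(sqrt pi * (real a / E) ^ a) * (sqrt pi * (real b / E) ^ b) = pi * ((real a / E) ^ a * (real b / E) ^ b)"
      by (simp add: mult_ac)
    ultimately show ?thesis by simp
  qed
  have factpos: "fact T > (0::real)" by simp
  have L: "(real a / real T) ^ a * (real b / real T) ^ b = ((real a / E) ^ a * (real b / E) ^ b) / (real T / E) ^ T"
    unfolding T_def by (rule pow_ratio_id[OF E]) (use False in simp)
  have "Beta (real a + 1/2) (real b + 1/2) / pi = Gamma (real a + 1/2) * Gamma (real b + 1/2) / (pi * fact T)"
    unfolding Beta_def gT by simp
  also have "\<dots> \<ge> pi * ((real a / E) ^ a * (real b / E) ^ b) / (pi * (E * sqrt (real T) * (real T / E) ^ T))"
    using prodG fT factpos by (intro frac_le mult_left_mono) (auto intro!: mult_nonneg_nonneg)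
  finally have B1: "((real a / E) ^ a * (real b / E) ^ b) / (real T / E) ^ T / (E * sqrt (real T))
         \<le> Beta (real a + 1/2) (real b + 1/2) / pi"
    by (simp add: field_simps)
  have "(real a / real T) ^ a * (real b / real T) ^ b \<le> (E * sqrt (real T)) * (Beta (real a + 1/2) (real b + 1/2) / pi)"
    using B1 unfolding L[symmetric] using E Tp by (simp add: field_simps)
  also have "\<dots> \<le> (E * real n) * (Beta (real a + 1/2) (real b + 1/2) / pi)"
  proof (intro mult_right_mono mult_left_mono)
    have "real T \<le> real n ^ 2" using T unfolding T_def by (metis of_nat_le_iff of_nat_power)
    hence "sqrt (real T) \<le> sqrt (real n ^ 2)" by (rule real_sqrt_le_mono)
    thus "sqrt (real T) \<le> real n" by simp
    show "0 \<le> E" using E by simp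
    show "0 \<le> Beta (real a + 1/2) (real b + 1/2) / pi"
      by (simp add: Beta_def Gamma_real_pos less_imp_le add_pos_nonneg)
  qed
  finally show ?thesis by (simp add: T_def E_def)
qed


lemma pi_bound:
  fixes n k :: nat and c :: "nat \<Rightarrow> nat"
  assumes n: "n \<ge> 1" and k: "k \<ge> 1" and cs: "(\<Sum>a<k. c a) = n"
  shows "(\<Prod>a<k. (real (c a) / real n) ^ c a)
     \<le> (exp (1 + real k * (real k - 1) / (4 * real n)) * real n powr ((real k - 1) / 2) / Gamma (real k / 2)) *
        (Gamma (real k / 2) / Gamma (1/2) ^ k * (\<Prod>a<k. Gamma (real (c a) + 1/2)) / Gamma (real n + real k / 2))"
proof -
  define E :: real where "E = exp 1"
  define Ek where "Ek = real k * (real k - 1) / (4 * real n)"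
  have E: "E > 0" by (simp add: E_def)
  have rn: "real n \<ge> 1" using n by simp
  have gk: "Gamma (real k / 2) > 0" using k by (intro Gamma_real_pos) simp
  have gb: "Gamma (real n + real k / 2) > 0" using k by (intro Gamma_real_pos) (simp add: add_nonneg_pos)
  define A where "A = exp (1 + Ek) * real n powr ((real k - 1) / 2) / sqrt pi ^ k"
  define G where "G = (\<Prod>a<k. Gamma (real (c a) + 1/2))"
  define G0 where "G0 = sqrt pi ^ k * ((\<Prod>a<k. real (c a) ^ c a) / E ^ n)"
  define B0 where "B0 = E * sqrt (real n) * (real n ^ n / E ^ n) * real n powr (real k / 2 - 1) * exp Ek"
  have RHS: "(exp (1 + Ek) * real n powr ((real k - 1) / 2) / Gamma (real k / 2)) *
        (Gamma (real k / 2) / Gamma (1/2) ^ k * G / Gamma (real n + real k / 2)) = A * G / Gamma (real n + real k / 2)"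
    using gk by (simp add: A_def Gamma_one_half_real field_simps)
  have GG0: "G0 \<le> G"
  proof -
    have "(\<Prod>a<k. sqrt pi * (real (c a) / E) ^ c a) \<le> G"
      unfolding G_def E_def by (intro prod_mono conjI G1) auto
    moreover have "(\<Prod>a<k. sqrt pi * (real (c a) / E) ^ c a) = G0"
    proof -
      have "(\<Prod>a<k. sqrt pi * (real (c a) / E) ^ c a) = sqrt pi ^ k * (\<Prod>a<k. real (c a) ^ c a / E ^ c a)"
        unfolding power_divide prod.distrib by simp
      also have "(\<Prod>a<k. real (c a) ^ c a / E ^ c a) = (\<Prod>a<k. real (c a) ^ c a) / (\<Prod>a<k. E ^ c a)"
        by (rule prod_dividef)
      also have "(\<Prod>a<k. E ^ c a) = E ^ n" using cs power_sum[of E c "{..<k}"] by simp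
      finally show ?thesis by (simp add: G0_def)
    qed
    ultimately show ?thesis by simp
  qed
  have BB0: "Gamma (real n + real k / 2) \<le> B0"
  proof -
    have "Gamma (real n + real k / 2) \<le> fact n * real n powr (real k / 2 - 1) * exp Ek"
      unfolding Ek_def by (rule G3[OF n k])
    also have "\<dots> \<le> (E * sqrt (real n) * (real n / E) ^ n) * real n powr (real k / 2 - 1) * exp Ek"
      unfolding E_def by (intro mult_right_mono G2[OF n]) auto
    finally show ?thesis by (simp add: B0_def power_divide)
  qed
  have A0: "A \<ge> 0" by (simp add: A_def)
  have G00: "G0 \<ge> 0" using E unfolding G0_def by (intro mult_nonneg_nonneg divide_nonneg_nonneg prod_nonneg) auto
  have "A * G0 / B0 \<le> A * G / Gamma (real n + real k / 2)"
    by (rule frac_le) (use A0 G00 GG0 BB0 gb in \<open>auto intro: mult_left_mono mult_nonneg_nonneg\<close>)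
  moreover have "A * G0 / B0 = (\<Prod>a<k. (real (c a) / real n) ^ c a)"
  proof -
    have e1: "exp (1 + Ek) = E * exp Ek" by (simp add: E_def exp_add)
    have e2: "real n powr ((real k - 1) / 2) = sqrt (real n) * real n powr (real k / 2 - 1)"
    proof -
      have eqX: "(real k - 1) / 2 = 1/2 + (real k / 2 - 1)" by (simp add: field_simps)
      have "real n powr ((real k - 1) / 2) = real n powr (1/2) * real n powr (real k / 2 - 1)"
        by (simp only: eqX powr_add)
      thus ?thesis using rn by (simp add: powr_half_sqrt)
    qed
    have lhs: "(\<Prod>a<k. (real (c a) / real n) ^ c a) = (\<Prod>a<k. real (c a) ^ c a) / real n ^ n"
    proof -
      have "(\<Prod>a<k. (real (c a) / real n) ^ c a) = (\<Prod>a<k. real (c a) ^ c a / real n ^ c a)"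
        by (simp add: power_divide)
      also have "\<dots> = (\<Prod>a<k. real (c a) ^ c a) / (\<Prod>a<k. real n ^ c a)" by (rule prod_dividef)
      also have "(\<Prod>a<k. real n ^ c a) = real n ^ n" using cs power_sum[of "real n" c "{..<k}"] by simp
      finally show ?thesis .
    qed
    have pn: "real n powr (real k / 2 - 1) > 0" "sqrt (real n) > 0" "real n ^ n > 0" "sqrt pi ^ k > 0" "E ^ n > 0"
      using rn E by auto
    show ?thesis unfolding lhs A_def G0_def B0_def e1 e2
      using pn E by (simp add: field_simps)
  qed
  ultimately show ?thesis using RHS unfolding G_def Ek_def by simp
qed


lemma ln_sqrt_pi: "ln (Gamma (1/2 :: real)) \<ge> 1/2"
proof -
  have "exp 1 < (3::real)" using e_less_272 by simp
  hence "exp 1 \<le> pi" using pi_gt3 by simp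
  hence "ln (exp 1) \<le> ln pi" by (subst ln_le_cancel_iff) auto
  hence "1 \<le> ln pi" by simp
  moreover have "ln (sqrt pi) = ln pi / 2" by (simp add: ln_sqrt)
  ultimately show ?thesis by (simp add: Gamma_one_half_real)
qed

lemma const_bound:
  fixes k n q :: nat assumes k: "k \<ge> 1" and n: "n \<ge> 1" and q: "2 * q = k * (k + 1)"
  shows "(exp (1 + real k * (real k - 1) / (4 * real n)) * real n powr ((real k - 1) / 2) / Gamma (real k / 2)) *
         (exp 1 * real n) ^ q \<le> exp ((real (k * (k + 2)) / 2 - 1/2) * ln (real n) + c_const k n)"
proof -
  define L where "L = ln (Gamma (1/2 :: real))"
  define Lk where "Lk = ln (Gamma (real k / 2))"
  define ln_n where "ln_n = ln (real n)"
  have rn: "real n > 0" using n by simp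
  have gk: "Gamma (real k / 2) > 0" using k by (intro Gamma_real_pos) simp
  have g12: "Gamma (1/2 :: real) > 0" by (simp add: Gamma_one_half_real)
  have q2: "2 * real q = real k * (real k + 1)"
  proof -
    have "real (2 * q) = real (k * (k + 1))" using q by simp
    thus ?thesis by (simp add: algebra_simps)
  qed
  have qr: "real q = real k * (real k + 1) / 2" using q2 by linarith
  have qge: "real q \<ge> 1"
  proof -
    have "1 * 2 \<le> k * (k + 1)" using k by (intro mult_le_mono) auto
    hence "q \<ge> 1" using q by linarith
    thus ?thesis by simp
  qed
  have LHS: "(exp (1 + real k * (real k - 1) / (4 * real n)) * real n powr ((real k - 1) / 2) / Gamma (real k / 2)) *
         (exp 1 * real n) ^ q = exp (1 + real k * (real k - 1) / (4 * real n) + (real k - 1) / 2 * ln_n - Lk + real q * (1 + ln_n))"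
  proof -
    have a: "real n powr ((real k - 1) / 2) = exp ((real k - 1) / 2 * ln_n)" using rn by (simp add: powr_def ln_n_def)
    have eL: "exp Lk = Gamma (real k / 2)" using gk unfolding Lk_def by (rule exp_ln)
    have b: "1 / Gamma (real k / 2) = exp (- Lk)" by (simp only: exp_minus eL inverse_eq_divide)
    have en: "exp (1 + ln_n) = exp 1 * real n" using rn unfolding ln_n_def exp_add by simp
    have c: "(exp 1 * real n) ^ q = exp (real q * (1 + ln_n))"
      by (simp only: en[symmetric] exp_of_nat_mult)
    define A1 where "A1 = 1 + real k * (real k - 1) / (4 * real n)"
    define X where "X = (real k - 1) / 2 * ln_n"
    define Y where "Y = real q * (1 + ln_n)"
    have "exp A1 * exp X / Gamma (real k / 2) * exp Y = exp A1 * exp X * (1 / Gamma (real k / 2)) * exp Y"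
      by simp
    also have "\<dots> = exp A1 * exp X * exp (- Lk) * exp Y" unfolding b ..
    also have "\<dots> = exp (A1 + X + (- Lk) + Y)" by (simp only: exp_add)
    also have "A1 + X + (- Lk) + Y = A1 + X - Lk + Y" by simp
    finally show ?thesis unfolding a c A1_def[symmetric] X_def[symmetric] Y_def[symmetric] .
  qed
  have RHS: "(real (k * (k + 2)) / 2 - 1/2) * ln (real n) + c_const k n
      = ((real k - 1) / 2 + real q) * ln_n + real q * L + real k * (real k - 1) / (4 * real n) + 1 / (12 * real n)
        + (L - Lk) + 7 * real q / 6"
  proof -
    have e1: "real (k * (k + 2)) / 2 - 1/2 = (real k - 1) / 2 + real q" using qr by (simp add: field_simps)
    have e2: "real (k * (k - 1)) = real k * (real k - 1)" using k by (simp add: of_nat_diff)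
    have e3: "ln (Gamma (1/2) / Gamma (real k / 2)) = L - Lk" using gk by (simp add: ln_div L_def Lk_def Gamma_one_half_real)
    have e4: "real (k * (k + 1)) = 2 * real q" using q by (metis of_nat_mult of_nat_numeral)
    show ?thesis unfolding c_const_def e1 e2 e3 e4 ln_n_def L_def by (simp add: field_simps)
  qed
  have L: "L \<ge> 1/2" using ln_sqrt_pi by (simp add: L_def)
  have "1 + real k * (real k - 1) / (4 * real n) + (real k - 1) / 2 * ln_n - Lk + real q * (1 + ln_n)
     \<le> ((real k - 1) / 2 + real q) * ln_n + real q * L + real k * (real k - 1) / (4 * real n) + 1 / (12 * real n)
        + (L - Lk) + 7 * real q / 6"
  proof -
    have "real q * L \<ge> real q * (1/2)" using L qge by (intro mult_left_mono) auto
    moreover have "1 / (12 * real n) \<ge> 0" using rn by simp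
    moreover have "((real k - 1) / 2 + real q) * ln_n = (real k - 1) / 2 * ln_n + real q * ln_n"
      by (simp add: algebra_simps)
    moreover have "real q * (1 + ln_n) = real q + real q * ln_n" by (simp add: algebra_simps)
    ultimately show ?thesis using L qge by linarith
  qed
  thus ?thesis unfolding LHS RHS by simp
qed


lemma cnt_sum_form: "cnt n z a = (\<Sum>i<n. of_bool (z i = a))"
proof -
  have "(\<Sum>i<n. of_bool (z i = a)) = (of_nat (card ({..<n} \<inter> {i. z i = a})) :: nat)"
    by (rule sum_of_bool_eq) auto
  moreover have "{..<n} \<inter> {i. z i = a} = {i. i < n \<and> z i = a}" by auto
  ultimately show ?thesis by (simp add: cnt_def)
qed

lemma cnt_le: "cnt n z a \<le> n"
proof -
  have "card {i. i < n \<and> z i = a} \<le> card {..<n}" by (intro card_mono) auto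
  thus ?thesis by (simp add: cnt_def)
qed

lemma cnt_sum:
  assumes "z \<in> {..<n} \<rightarrow>\<^sub>E {..<k}"
  shows "(\<Sum>a<k. cnt n z a) = n"
proof -
  have "(\<Sum>a<k. cnt n z a) = (\<Sum>a<k. \<Sum>i<n. of_bool (z i = a))" by (simp add: cnt_sum_form)
  also have "\<dots> = (\<Sum>i<n. \<Sum>a<k. of_bool (z i = a))" by (rule sum.swap)
  also have "\<dots> = (\<Sum>i<n. (1::nat))"
  proof (intro sum.cong refl)
    fix i assume i: "i \<in> {..<n}"
    hence zi: "z i < k" using assms by auto
    have "(\<Sum>a<k. of_bool (z i = a)) = (\<Sum>a\<in>{z i}. (of_bool (z i = a) :: nat))"
      by (rule sum.mono_neutral_right) (use zi in auto)
    thus "(\<Sum>a<k. of_bool (z i = a)) = (1::nat)" by simp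
  qed
  finally show ?thesis by simp
qed

lemma Ocnt_sym:
  assumes "adjacency n x"
  shows "Ocnt n z x a b = Ocnt n z x b a"
proof -
  have "Ocnt n z x a b = (\<Sum>j<n. \<Sum>i<n. of_bool (z i = a \<and> z j = b \<and> x i j))"
    unfolding Ocnt_def by (rule sum.swap)
  also have "\<dots> = Ocnt n z x b a"
    unfolding Ocnt_def using assms unfolding adjacency_def
    by (intro sum.cong refl) (auto simp: conj_commute)
  finally show ?thesis .
qed

lemma Ocnt_le:
  assumes "adjacency n x"
  shows "Ocnt n z x a b \<le> npairs n z a b"
proof (cases "a = b")
  case False
  have "Ocnt n z x a b \<le> (\<Sum>i<n. \<Sum>j<n. of_bool (z i = a) * of_bool (z j = b))"
    unfolding Ocnt_def by (intro sum_mono) auto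
  also have "\<dots> = cnt n z a * cnt n z b"
    by (simp only: cnt_sum_form sum_product)
  finally show ?thesis using False by (simp add: npairs_def)
next
  case True
  have inner: "(\<Sum>j<n. of_bool (z i = a \<and> z j = a \<and> x i j)) \<le> of_bool (z i = a) * (cnt n z a - 1)"
    if i: "i < n" for i
  proof (cases "z i = a")
    case True
    have "(\<Sum>j<n. (of_bool (z i = a \<and> z j = a \<and> x i j) :: nat)) \<le> (\<Sum>j<n. of_bool (z j = a \<and> j \<noteq> i))"
      using assms i unfolding adjacency_def by (intro sum_mono) auto
    also have "\<dots> = card ({..<n} \<inter> {j. z j = a \<and> j \<noteq> i})"
      by (subst sum_of_bool_eq) auto
    also have "{..<n} \<inter> {j. z j = a \<and> j \<noteq> i} = {j. j < n \<and> z j = a} - {i}" by auto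
    also have "card \<dots> = cnt n z a - 1" using True i by (simp add: cnt_def)
    finally show ?thesis using True by simp
  qed simp
  have "Ocnt n z x a b \<le> (\<Sum>i<n. of_bool (z i = a) * (cnt n z a - 1))"
    unfolding Ocnt_def True[symmetric] by (rule sum_mono, rule inner) auto
  also have "\<dots> = cnt n z a * (cnt n z a - 1)"
    by (simp only: cnt_sum_form sum_distrib_right)
  finally show ?thesis using True by (simp add: npairs_def)
qed

lemma sum_sym_double:
  fixes f :: "nat \<Rightarrow> nat \<Rightarrow> nat"
  assumes "\<And>i j. i < N \<Longrightarrow> j < N \<Longrightarrow> f i j = f j i" "\<And>i. i < N \<Longrightarrow> f i i = 0"
  shows "(\<Sum>i<N. \<Sum>j<N. f i j) = 2 * (\<Sum>i<N. \<Sum>j<i. f i j)"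
  using assms
proof (induction N)
  case 0 then show ?case by simp
next
  case (Suc N)
  have IH: "(\<Sum>i<N. \<Sum>j<N. f i j) = 2 * (\<Sum>i<N. \<Sum>j<i. f i j)"
    using Suc.prems by (intro Suc.IH) auto
  have s: "(\<Sum>i<N. f i N) = (\<Sum>j<N. f N j)" using Suc.prems(1) by (intro sum.cong) auto
  have "(\<Sum>i<Suc N. \<Sum>j<Suc N. f i j) = (\<Sum>i<N. \<Sum>j<N. f i j) + (\<Sum>i<N. f i N) + (\<Sum>j<N. f N j) + f N N"
    by (simp add: sum.distrib)
  also have "\<dots> = 2 * (\<Sum>i<Suc N. \<Sum>j<i. f i j)"
    using IH s Suc.prems(2)[of N] by simp
  finally show ?case .
qed

definition Eh :: "nat \<Rightarrow> (nat \<Rightarrow> nat) \<Rightarrow> (nat \<Rightarrow> nat \<Rightarrow> bool) \<Rightarrow> nat \<Rightarrow> nat" where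
  "Eh n z x a = (\<Sum>i<n. \<Sum>j<i. of_bool (z i = a \<and> z j = a \<and> x i j))"

lemma Ocnt_even:
  assumes "adjacency n x"
  shows "Ocnt n z x a a = 2 * Eh n z x a"
  unfolding Ocnt_def Eh_def
  by (rule sum_sym_double) (use assms in \<open>auto simp: adjacency_def\<close>)

definition Qset :: "nat \<Rightarrow> (nat \<times> nat) set" where
  "Qset k = {(a, b). a \<le> b \<and> b < k}"

definition fib :: "nat \<Rightarrow> nat \<times> nat \<Rightarrow> (nat \<times> nat) set" where
  "fib k p = {c \<in> {..<k} \<times> {..<k}. (min (fst c) (snd c), max (fst c) (snd c)) = p}"

definition X1 :: "nat \<Rightarrow> nat \<Rightarrow> (nat \<Rightarrow> nat) \<Rightarrow> (nat \<Rightarrow> nat \<Rightarrow> bool) \<Rightarrow> nat \<times> nat \<Rightarrow> real" where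
  "X1 k n z x p = (\<Sum>c\<in>fib k p. real (Ocnt n z x (fst c) (snd c)) / 2)"

definition X2 :: "nat \<Rightarrow> nat \<Rightarrow> (nat \<Rightarrow> nat) \<Rightarrow> (nat \<Rightarrow> nat \<Rightarrow> bool) \<Rightarrow> nat \<times> nat \<Rightarrow> real" where
  "X2 k n z x p = (\<Sum>c\<in>fib k p. (real (npairs n z (fst c) (snd c)) - real (Ocnt n z x (fst c) (snd c))) / 2)"

definition e1 :: "nat \<Rightarrow> (nat \<Rightarrow> nat) \<Rightarrow> (nat \<Rightarrow> nat \<Rightarrow> bool) \<Rightarrow> nat \<times> nat \<Rightarrow> nat" where
  "e1 n z x p = (if fst p = snd p then Eh n z x (fst p) else Ocnt n z x (fst p) (snd p))"

definition e2 :: "nat \<Rightarrow> (nat \<Rightarrow> nat) \<Rightarrow> (nat \<Rightarrow> nat \<Rightarrow> bool) \<Rightarrow> nat \<times> nat \<Rightarrow> nat" where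
  "e2 n z x p = (if fst p = snd p then npairs n z (fst p) (fst p) div 2 - Eh n z x (fst p)
                 else npairs n z (fst p) (snd p) - Ocnt n z x (fst p) (snd p))"

lemma fib_eq: "p \<in> Qset k \<Longrightarrow> fib k p = {p, (snd p, fst p)}"
  by (cases p) (auto simp: fib_def Qset_def min_def max_def split: if_splits)

lemma finite_Qset: "finite (Qset k)"
proof -
  have "Qset k \<subseteq> {..<k} \<times> {..<k}" by (auto simp: Qset_def)
  thus ?thesis by (rule finite_subset) auto
qed

lemma npairs_even: "even (npairs n z a a)"
  by (auto simp: npairs_def)

lemma X12_nat:
  assumes adj: "adjacency n x" and p: "p \<in> Qset k"
  shows "X1 k n z x p = real (e1 n z x p)" "X2 k n z x p = real (e2 n z x p)"
    "e1 n z x p + e2 n z x p \<le> n ^ 2"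
proof -
  obtain a b where ab: "p = (a, b)" by (cases p)
  have le: "Ocnt n z x c d \<le> npairs n z c d" for c d by (rule Ocnt_le[OF adj])
  have np_le: "npairs n z c d \<le> n ^ 2" for c d
  proof -
    have "npairs n z c d \<le> cnt n z c * cnt n z d" by (simp add: npairs_def)
    also have "\<dots> \<le> n * n" by (intro mult_le_mono cnt_le)
    finally show ?thesis by (simp add: power2_eq_square)
  qed
    have all: "X1 k n z x p = real (e1 n z x p) \<and> X2 k n z x p = real (e2 n z x p) \<and> e1 n z x p + e2 n z x p \<le> n ^ 2"
    proof (cases "a = b")
      case True
      have f: "fib k p = {(a, a)}" using fib_eq[OF p] ab True by simp
      have O2: "Ocnt n z x a a = 2 * Eh n z x a" by (rule Ocnt_even[OF adj])
      have ev: "npairs n z a a = 2 * (npairs n z a a div 2)" using npairs_even[of n z a] by simp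
      have leE: "Eh n z x a \<le> npairs n z a a div 2" using le[of a a] O2 ev by linarith
      have "X1 k n z x p = real (Eh n z x a)" unfolding X1_def f using O2 by simp
      moreover have "X2 k n z x p = real (npairs n z a a div 2 - Eh n z x a)"
      proof -
        have "X2 k n z x p = (real (npairs n z a a) - real (Ocnt n z x a a)) / 2" unfolding X2_def f by simp
        also have "\<dots> = real (npairs n z a a div 2) - real (Eh n z x a)"
          by (subst ev, subst O2) (simp only: of_nat_mult, simp)
        finally show ?thesis using leE by (simp add: of_nat_diff)
      qed
      moreover have "Eh n z x a + (npairs n z a a div 2 - Eh n z x a) \<le> n ^ 2"
        using leE np_le[of a a] by linarith
      ultimately show ?thesis using True ab by (simp add: e1_def e2_def)
    next
      case False
      have f: "fib k p = {(a, b), (b, a)}" using fib_eq[OF p] ab by simp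
      have sy: "Ocnt n z x b a = Ocnt n z x a b" by (rule Ocnt_sym[OF adj])
      have nsy: "npairs n z b a = npairs n z a b" using False by (simp add: npairs_def)
      have "X1 k n z x p = real (Ocnt n z x a b)" unfolding X1_def f using False sy by simp
      moreover have "X2 k n z x p = real (npairs n z a b - Ocnt n z x a b)"
        unfolding X2_def f using False sy nsy le[of a b] by (simp add: of_nat_diff)
      moreover have "Ocnt n z x a b + (npairs n z a b - Ocnt n z x a b) \<le> n ^ 2"
        using le[of a b] np_le[of a b] by linarith
      ultimately show ?thesis using False ab by (simp add: e1_def e2_def)
    qed
  thus "X1 k n z x p = real (e1 n z x p)" "X2 k n z x p = real (e2 n z x p)"
    "e1 n z x p + e2 n z x p \<le> n ^ 2" by auto
qed

lemma card_Qset: "2 * card (Qset k) = k * (k + 1)"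
proof (induction k)
  case 0 then show ?case by (simp add: Qset_def)
next
  case (Suc k)
  have e: "Qset (Suc k) = Qset k \<union> (\<lambda>a. (a, k)) ` {..k}" by (auto simp: Qset_def)
  have d: "Qset k \<inter> (\<lambda>a. (a, k)) ` {..k} = {}" by (auto simp: Qset_def)
  have "card (Qset (Suc k)) = card (Qset k) + card ((\<lambda>a. (a, k)) ` {..k})"
    unfolding e by (rule card_Un_disjoint[OF finite_Qset _ d]) auto
  also have "card ((\<lambda>a. (a, k)) ` {..k}) = k + 1" by (subst card_image) (auto simp: inj_on_def)
  finally show ?case using Suc.IH by simp
qed


lemma rpow0_nonneg: "rpow0 y e \<ge> 0"
  by (simp add: rpow0_def)

lemma rpow0_add: "e \<ge> 0 \<Longrightarrow> f \<ge> 0 \<Longrightarrow> rpow0 y e * rpow0 y f = rpow0 y (e + f)"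
  by (auto simp: rpow0_def powr_add)

lemma rpow0_sum:
  assumes "finite A" "\<And>i. i \<in> A \<Longrightarrow> e i \<ge> 0"
  shows "(\<Prod>i\<in>A. rpow0 y (e i)) = rpow0 y (\<Sum>i\<in>A. e i)"
  using assms
proof (induction A rule: finite_induct)
  case empty then show ?case by (simp add: rpow0_def)
next
  case (insert a A)
  have "(\<Prod>i\<in>insert a A. rpow0 y (e i)) = rpow0 y (e a) * rpow0 y (\<Sum>i\<in>A. e i)"
    using insert by simp
  also have "\<dots> = rpow0 y (e a + (\<Sum>i\<in>A. e i))"
    using insert.prems by (intro rpow0_add sum_nonneg) auto
  finally show ?case using insert by simp
qed

lemma rpow0_nat: "y \<ge> 0 \<Longrightarrow> rpow0 y (real m) = y ^ m"
  by (auto simp: rpow0_def powr_realpow)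

lemma regroup:
  assumes adj: "adjacency n x" and sym: "\<And>a b. a < k \<Longrightarrow> b < k \<Longrightarrow> Pm a b = Pm b a"
  shows "(\<Prod>a<k. \<Prod>b<k. rpow0 (Pm a b) (real (Ocnt n z x a b) / 2) *
            rpow0 (1 - Pm a b) ((real (npairs n z a b) - real (Ocnt n z x a b)) / 2))
       = (\<Prod>p\<in>Qset k. rpow0 (Pm (fst p) (snd p)) (real (e1 n z x p)) *
            rpow0 (1 - Pm (fst p) (snd p)) (real (e2 n z x p)))"
proof -
  define f where "f c = rpow0 (Pm (fst c) (snd c)) (real (Ocnt n z x (fst c) (snd c)) / 2) *
            rpow0 (1 - Pm (fst c) (snd c)) ((real (npairs n z (fst c) (snd c)) - real (Ocnt n z x (fst c) (snd c))) / 2)" for c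
  define g where "g c = (min (fst c) (snd c), max (fst c) (snd c))" for c :: "nat \<times> nat"
  have "(\<Prod>a<k. \<Prod>b<k. rpow0 (Pm a b) (real (Ocnt n z x a b) / 2) *
            rpow0 (1 - Pm a b) ((real (npairs n z a b) - real (Ocnt n z x a b)) / 2))
      = (\<Prod>c\<in>{..<k} \<times> {..<k}. f c)"
    by (simp add: prod.cartesian_product' f_def)
  also have "\<dots> = (\<Prod>p\<in>Qset k. \<Prod>c\<in>{c. c \<in> {..<k} \<times> {..<k} \<and> g c = p}. f c)"
    by (rule prod.group[symmetric]) (auto simp: finite_Qset g_def Qset_def[symmetric], auto simp: Qset_def)
  also have "\<dots> = (\<Prod>p\<in>Qset k. rpow0 (Pm (fst p) (snd p)) (real (e1 n z x p)) *
            rpow0 (1 - Pm (fst p) (snd p)) (real (e2 n z x p)))"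
  proof (intro prod.cong refl)
    fix p assume p: "p \<in> Qset k"
    have F: "{c. c \<in> {..<k} \<times> {..<k} \<and> g c = p} = fib k p" by (auto simp: fib_def g_def)
    have finF: "finite (fib k p)" by (auto simp: fib_def)
    have Pc: "Pm (fst c) (snd c) = Pm (fst p) (snd p)" if "c \<in> fib k p" for c
      using that sym by (cases c) (auto simp: fib_def min_def max_def split: if_splits)
    have "(\<Prod>c\<in>fib k p. f c) = (\<Prod>c\<in>fib k p. rpow0 (Pm (fst p) (snd p)) (real (Ocnt n z x (fst c) (snd c)) / 2) *
            rpow0 (1 - Pm (fst p) (snd p)) ((real (npairs n z (fst c) (snd c)) - real (Ocnt n z x (fst c) (snd c))) / 2))"
      unfolding f_def by (intro prod.cong refl) (simp add: Pc)
    also have "\<dots> = rpow0 (Pm (fst p) (snd p)) (X1 k n z x p) * rpow0 (1 - Pm (fst p) (snd p)) (X2 k n z x p)"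
      unfolding prod.distrib X1_def X2_def
      using Ocnt_le[OF adj] by (subst (1 2) rpow0_sum) (auto simp: finF)
    also have "\<dots> = rpow0 (Pm (fst p) (snd p)) (real (e1 n z x p)) * rpow0 (1 - Pm (fst p) (snd p)) (real (e2 n z x p))"
      using X12_nat[OF adj p] by simp
    finally show "(\<Prod>c\<in>{c. c \<in> {..<k} \<times> {..<k} \<and> g c = p}. f c) = \<dots>" unfolding F .
  qed
  finally show ?thesis .
qed


lemma beta_unit:
  fixes a b :: real assumes "a > 0" "b > 0"
  shows "(\<integral>\<^sup>+ x. ennreal (indicator {0<..<1} x * x powr (a-1) * (1 - x) powr (b-1)) \<partial>lborel) = ennreal (Beta a b)"
proof -
  have "(\<integral>\<^sup>+ x. ennreal (indicator {0<..<1} x * x powr (a-1) * (1 - x) powr (b-1)) \<partial>lborel)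
      = (\<integral>\<^sup>+ x. ennreal (indicator {0..1} x * (x powr (a-1) * (1 - x) powr (b-1))) \<partial>lborel)"
    by (intro nn_integral_cong) (auto simp: indicator_def)
  also have "\<dots> = ennreal (Beta a b)"
    by (rule nn_integral_has_integral_lebesgue[OF _ has_integral_Beta_real[OF assms]]) auto
  finally show ?thesis .
qed

lemma beta_scaled:
  fixes a b c :: real assumes "a > 0" "b > 0" "c > 0"
  shows "(\<integral>\<^sup>+ y. ennreal (indicator {0<..<c} y * y powr (a-1) * (c - y) powr (b-1)) \<partial>lborel)
     = ennreal (c powr (a + b - 1) * Beta a b)"
proof -
  define f where "f y = ennreal (indicator {0<..<c} y * y powr (a-1) * (c - y) powr (b-1))" for y
  have fm: "f \<in> borel_measurable borel" unfolding f_def by measurable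
  have "integral\<^sup>N lborel f = ennreal \<bar>c\<bar> * (\<integral>\<^sup>+ x. f (0 + c * x) \<partial>lborel)"
    by (rule nn_integral_real_affine[OF fm]) (use assms in auto)
  also have "(\<integral>\<^sup>+ x. f (0 + c * x) \<partial>lborel) =
      (\<integral>\<^sup>+ x. ennreal (c powr (a + b - 2)) * ennreal (indicator {0<..<1} x * x powr (a-1) * (1 - x) powr (b-1)) \<partial>lborel)"
  proof (intro nn_integral_cong)
    fix x :: real
    show "f (0 + c * x) = ennreal (c powr (a + b - 2)) * ennreal (indicator {0<..<1} x * x powr (a-1) * (1 - x) powr (b-1))"
    proof (cases "0 < x \<and> x < 1")
      case True
      have i1: "indicator {0<..<c} (c * x) = (1::real)" using True assms by (auto simp: indicator_def)
      have i2: "indicator {0<..<1} x = (1::real)" using True by (auto simp: indicator_def)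
      have "(c * x) powr (a - 1) * (c - c * x) powr (b - 1) = c powr (a + b - 2) * (x powr (a-1) * (1 - x) powr (b-1))"
      proof -
        have "c - c * x = c * (1 - x)" by (simp add: algebra_simps)
        hence "(c * x) powr (a - 1) * (c - c * x) powr (b - 1) = (c powr (a-1) * c powr (b-1)) * (x powr (a-1) * (1 - x) powr (b-1))"
          using True assms by (simp add: powr_mult mult_ac)
        also have "c powr (a-1) * c powr (b-1) = c powr (a + b - 2)"
          using assms by (simp add: powr_add[symmetric])
        finally show ?thesis .
      qed
      thus ?thesis unfolding f_def i1 i2 using True assms
        by (simp add: ennreal_mult'[symmetric] mult_ac)
    next
      case False
      hence "c * x \<notin> {0<..<c}" using assms
        by (auto simp: mult_less_cancel_left2 zero_less_mult_iff)
      thus ?thesis using False unfolding f_def by (auto simp: indicator_def)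
    qed
  qed
  also have "\<dots> = ennreal (c powr (a + b - 2)) * ennreal (Beta a b)"
    by (subst nn_integral_cmult) (auto simp: beta_unit[OF assms(1,2)])
  finally have "integral\<^sup>N lborel f = ennreal (c * (c powr (a + b - 2) * Beta a b))"
    using assms by (simp add: ennreal_mult'[symmetric] Beta_def mult_ac ennreal_mult)
  also have "c * (c powr (a + b - 2) * Beta a b) = c powr (a + b - 1) * Beta a b"
  proof -
    have "c * c powr (a + b - 2) = c powr (a + b - 1)"
      using assms by (simp add: powr_add[symmetric] powr_mult_base)
    thus ?thesis by (simp add: mult_ac)
  qed
  finally show ?thesis unfolding f_def .
qed


definition dirD :: "nat \<Rightarrow> (nat \<Rightarrow> real) \<Rightarrow> real \<Rightarrow> real \<Rightarrow> (nat \<Rightarrow> real) \<Rightarrow> real" where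
  "dirD m \<alpha> \<beta> t u = (\<Prod>j<m. indicator {0<..} (u j) * u j powr (\<alpha> j - 1)) *
      (indicator {0<..} (t - (\<Sum>j<m. u j)) * (t - (\<Sum>j<m. u j)) powr (\<beta> - 1))"

lemma dirD_nonneg: "dirD m \<alpha> \<beta> t u \<ge> 0"
  unfolding dirD_def by (intro mult_nonneg_nonneg prod_nonneg) (auto simp: indicator_def)

lemma dirD_meas: "(\<lambda>u. dirD m \<alpha> \<beta> t u) \<in> borel_measurable (PiM {..<m} (\<lambda>_. lborel))"
  unfolding dirD_def by measurable

lemma psf_lborel: "product_sigma_finite (\<lambda>_::'i. lborel :: real measure)"
  by (simp add: product_sigma_finite_def sigma_finite_lborel)

lemma inner_y:
  fixes S t a b :: real assumes "a > 0" "b > 0"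
  shows "(\<integral>\<^sup>+ y. ennreal (indicator {0<..} y * y powr (a - 1) * (indicator {0<..} (t - (S + y)) * (t - (S + y)) powr (b - 1))) \<partial>lborel)
       = ennreal (Beta a b * (indicator {0<..} (t - S) * (t - S) powr (a + b - 1)))"
proof (cases "t - S > 0")
  case True
  have "(\<integral>\<^sup>+ y. ennreal (indicator {0<..} y * y powr (a - 1) * (indicator {0<..} (t - (S + y)) * (t - (S + y)) powr (b - 1))) \<partial>lborel)
      = (\<integral>\<^sup>+ y. ennreal (indicator {0<..<t - S} y * y powr (a-1) * ((t - S) - y) powr (b-1)) \<partial>lborel)"
    by (intro nn_integral_cong) (auto simp: indicator_def algebra_simps)
  also have "\<dots> = ennreal ((t - S) powr (a + b - 1) * Beta a b)"
    by (rule beta_scaled) (use assms True in auto)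
  finally show ?thesis using True by (simp add: mult_ac)
next
  case False
  have "(\<integral>\<^sup>+ y. ennreal (indicator {0<..} y * y powr (a - 1) * (indicator {0<..} (t - (S + y)) * (t - (S + y)) powr (b - 1))) \<partial>lborel)
      = (\<integral>\<^sup>+ y. 0 \<partial>(lborel::real measure))"
    by (intro nn_integral_cong) (use False in \<open>auto simp: indicator_def\<close>)
  thus ?thesis using False by (simp add: indicator_def)
qed

lemma dirichlet:
  assumes "\<And>j. j < m \<Longrightarrow> \<alpha> j > 0" "\<beta> > 0" "t > 0"
  shows "(\<integral>\<^sup>+ u. ennreal (dirD m \<alpha> \<beta> t u) \<partial>PiM {..<m} (\<lambda>_. lborel))
     = ennreal (t powr ((\<Sum>j<m. \<alpha> j) + \<beta> - 1) * (\<Prod>j<m. Gamma (\<alpha> j)) * Gamma \<beta> / Gamma ((\<Sum>j<m. \<alpha> j) + \<beta>))"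
  using assms(1,2)
proof (induction m arbitrary: \<beta>)
  case 0
  interpret P: product_sigma_finite "\<lambda>_::nat. lborel :: real measure" by (rule psf_lborel)
  have "(\<integral>\<^sup>+ u. ennreal (dirD 0 \<alpha> \<beta> t u) \<partial>PiM {..<0} (\<lambda>_. lborel)) = ennreal (dirD 0 \<alpha> \<beta> t (\<lambda>k. undefined))"
    by (simp add: P.nn_integral_empty)
  also have "dirD 0 \<alpha> \<beta> t (\<lambda>k. undefined) = t powr (\<beta> - 1)"
    using assms(3) by (simp add: dirD_def)
  moreover have "Gamma \<beta> \<noteq> 0" using Gamma_real_pos[OF 0(2)] by simp
  ultimately show ?case using assms(3) by simp
next
  case (Suc m)
  interpret P: product_sigma_finite "\<lambda>_::nat. lborel :: real measure" by (rule psf_lborel)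
  define am where "am = \<alpha> m"
  have am: "am > 0" using Suc.prems by (simp add: am_def)
  have ins: "{..<Suc m} = insert m {..<m}" by auto
  have "(\<integral>\<^sup>+ u. ennreal (dirD (Suc m) \<alpha> \<beta> t u) \<partial>PiM {..<Suc m} (\<lambda>_. lborel))
     = (\<integral>\<^sup>+ x. \<integral>\<^sup>+ y. ennreal (dirD (Suc m) \<alpha> \<beta> t (x(m := y))) \<partial>lborel \<partial>PiM {..<m} (\<lambda>_. lborel))"
    unfolding ins
    by (rule P.product_nn_integral_insert) (auto simp: ins[symmetric] intro: measurable_compose[OF dirD_meas])
  also have "\<dots> = (\<integral>\<^sup>+ x. ennreal (Beta am \<beta>) * ennreal (dirD m \<alpha> (am + \<beta>) t x) \<partial>PiM {..<m} (\<lambda>_. lborel))"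
  proof (intro nn_integral_cong)
    fix x :: "nat \<Rightarrow> real"
    define C where "C = (\<Prod>j<m. indicator {0<..} (x j) * x j powr (\<alpha> j - 1))"
    define S where "S = (\<Sum>j<m. x j)"
    have C0: "C \<ge> 0" unfolding C_def by (intro prod_nonneg) (auto simp: indicator_def)
    have pw: "dirD (Suc m) \<alpha> \<beta> t (x(m := y)) = C * (indicator {0<..} y * y powr (am - 1) *
               (indicator {0<..} (t - (S + y)) * (t - (S + y)) powr (\<beta> - 1)))" for y
    proof -
      have p: "(\<Prod>j<m. indicator {0<..} ((x(m := y)) j) * (x(m := y)) j powr (\<alpha> j - 1)) = C"
        unfolding C_def by (intro prod.cong) auto
      have s: "(\<Sum>j<m. (x(m := y)) j) = S" unfolding S_def by (intro sum.cong) auto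
      show ?thesis unfolding dirD_def prod.lessThan_Suc sum.lessThan_Suc p s
        by (simp add: am_def mult_ac)
    qed
    have "(\<integral>\<^sup>+ y. ennreal (dirD (Suc m) \<alpha> \<beta> t (x(m := y))) \<partial>lborel)
        = (\<integral>\<^sup>+ y. ennreal C * ennreal (indicator {0<..} y * y powr (am - 1) *
               (indicator {0<..} (t - (S + y)) * (t - (S + y)) powr (\<beta> - 1))) \<partial>lborel)"
      unfolding pw using C0 by (intro nn_integral_cong) (simp add: ennreal_mult)
    also have "\<dots> = ennreal C * ennreal (Beta am \<beta> * (indicator {0<..} (t - S) * (t - S) powr (am + \<beta> - 1)))"
      by (subst nn_integral_cmult) (auto simp: inner_y[OF am Suc.prems(2)])
    also have "\<dots> = ennreal (Beta am \<beta>) * ennreal (dirD m \<alpha> (am + \<beta>) t x)"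
    proof -
      have "Beta am \<beta> \<ge> 0" using am Suc.prems(2) by (simp add: Beta_def Gamma_real_pos less_imp_le)
      moreover have "indicator {0<..} (t - S) * (t - S) powr (am + \<beta> - 1) \<ge> 0" by (simp add: indicator_def)
      ultimately show ?thesis using C0
        by (simp add: dirD_def C_def[symmetric] S_def[symmetric] ennreal_mult[symmetric] mult_ac)
    qed
    finally show "(\<integral>\<^sup>+ y. ennreal (dirD (Suc m) \<alpha> \<beta> t (x(m := y))) \<partial>lborel) = ennreal (Beta am \<beta>) * ennreal (dirD m \<alpha> (am + \<beta>) t x)" .
  qed
  also have "\<dots> = ennreal (Beta am \<beta>) * (\<integral>\<^sup>+ x. ennreal (dirD m \<alpha> (am + \<beta>) t x) \<partial>PiM {..<m} (\<lambda>_. lborel))"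
    by (rule nn_integral_cmult) (auto intro: measurable_compose[OF dirD_meas])
  also have "(\<integral>\<^sup>+ x. ennreal (dirD m \<alpha> (am + \<beta>) t x) \<partial>PiM {..<m} (\<lambda>_. lborel))
     = ennreal (t powr ((\<Sum>j<m. \<alpha> j) + (am + \<beta>) - 1) * (\<Prod>j<m. Gamma (\<alpha> j)) * Gamma (am + \<beta>) / Gamma ((\<Sum>j<m. \<alpha> j) + (am + \<beta>)))"
    by (rule Suc.IH) (use Suc.prems am in auto)
  also have "ennreal (Beta am \<beta>) * \<dots> = ennreal (t powr ((\<Sum>j<Suc m. \<alpha> j) + \<beta> - 1) * (\<Prod>j<Suc m. Gamma (\<alpha> j)) * Gamma \<beta> / Gamma ((\<Sum>j<Suc m. \<alpha> j) + \<beta>))"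
  proof -
    have g: "Gamma (am + \<beta>) > 0" using am Suc.prems(2) by (intro Gamma_real_pos) simp
    have b0: "Beta am \<beta> \<ge> 0" using am Suc.prems(2) by (simp add: Beta_def Gamma_real_pos less_imp_le)
    have r0: "t powr ((\<Sum>j<m. \<alpha> j) + (am + \<beta>) - 1) * (\<Prod>j<m. Gamma (\<alpha> j)) * Gamma (am + \<beta>) / Gamma ((\<Sum>j<m. \<alpha> j) + (am + \<beta>)) \<ge> 0"
    proof -
      have "(\<Sum>j<m. \<alpha> j) \<ge> 0" using Suc.prems by (intro sum_nonneg) (auto intro: less_imp_le)
      hence "Gamma ((\<Sum>j<m. \<alpha> j) + (am + \<beta>)) > 0" using am Suc.prems(2) by (intro Gamma_real_pos) simp
      moreover have "(\<Prod>j<m. Gamma (\<alpha> j)) \<ge> 0" using Suc.prems by (intro prod_nonneg) (auto intro: less_imp_le Gamma_real_pos)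
      ultimately show ?thesis using g by (intro divide_nonneg_pos mult_nonneg_nonneg) auto
    qed
    have "Beta am \<beta> * (t powr ((\<Sum>j<m. \<alpha> j) + (am + \<beta>) - 1) * (\<Prod>j<m. Gamma (\<alpha> j)) * Gamma (am + \<beta>) / Gamma ((\<Sum>j<m. \<alpha> j) + (am + \<beta>)))
       = t powr ((\<Sum>j<Suc m. \<alpha> j) + \<beta> - 1) * (\<Prod>j<Suc m. Gamma (\<alpha> j)) * Gamma \<beta> / Gamma ((\<Sum>j<Suc m. \<alpha> j) + \<beta>)"
      using g unfolding Beta_def by (simp add: am_def field_simps)
    thus ?thesis using b0 r0 by (simp add: ennreal_mult[symmetric])
  qed
  finally show ?case .
qed


definition spx :: "nat \<Rightarrow> (nat \<Rightarrow> real) \<Rightarrow> bool" where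
  "spx k u \<longleftrightarrow> (\<forall>j<k-1. 0 < u j) \<and> 0 < 1 - (\<Sum>j<k-1. u j)"

lemma pi_of_sum: "k \<ge> 1 \<Longrightarrow> (\<Sum>a<k. pi_of k u a) = 1"
proof -
  assume k: "k \<ge> 1"
  then obtain m where m: "k = Suc m" by (cases k) auto
  have "(\<Sum>a<k. pi_of k u a) = (\<Sum>a<m. pi_of k u a) + pi_of k u m" unfolding m by simp
  also have "(\<Sum>a<m. pi_of k u a) = (\<Sum>a<m. u a)" by (intro sum.cong) (auto simp: pi_of_def m)
  also have "pi_of k u m = 1 - (\<Sum>a<m. u a)" by (simp add: pi_of_def m)
  finally show ?thesis by simp
qed

lemma pi_of_pos_iff: "k \<ge> 1 \<Longrightarrow> (\<forall>a<k. 0 < pi_of k u a) \<longleftrightarrow> spx k u"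
proof -
  assume k: "k \<ge> 1"
  then obtain m where m: "k = Suc m" by (cases k) auto
  have "(\<forall>a<k. 0 < pi_of k u a) \<longleftrightarrow> (\<forall>a<m. 0 < pi_of k u a) \<and> 0 < pi_of k u m"
    unfolding m by (auto simp: less_Suc_eq)
  also have "(\<forall>a<m. 0 < pi_of k u a) \<longleftrightarrow> (\<forall>a<m. 0 < u a)" by (auto simp: pi_of_def m)
  also have "pi_of k u m = 1 - (\<Sum>a<m. u a)" by (simp add: pi_of_def m)
  finally show ?thesis by (simp add: spx_def m)
qed

lemma P_of_Q: "p \<in> Qset k \<Longrightarrow> P_of q (fst p) (snd p) = q p"
  by (cases p) (auto simp: P_of_def Qset_def min_def max_def)

lemma minmax_Q: "a < k \<Longrightarrow> b < k \<Longrightarrow> (min a b, max a b) \<in> Qset k"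
  by (auto simp: Qset_def)

lemma Theta_iff:
  assumes k: "k \<ge> 1"
  shows "(pi_of k u, P_of q) \<in> Theta k \<longleftrightarrow> spx k u \<and> (\<forall>p\<in>Qset k. 0 \<le> q p \<and> q p \<le> 1)"
proof -
  have s: "(\<Sum>a<k. pi_of k u a) = 1" by (rule pi_of_sum[OF k])
  have A: "(\<forall>a<k. 0 < pi_of k u a \<and> pi_of k u a \<le> 1) \<longleftrightarrow> spx k u"
  proof
    assume "\<forall>a<k. 0 < pi_of k u a \<and> pi_of k u a \<le> 1"
    thus "spx k u" using pi_of_pos_iff[OF k] by auto
  next
    assume sx: "spx k u"
    hence pos: "\<forall>a<k. 0 < pi_of k u a" using pi_of_pos_iff[OF k] by auto
    have "pi_of k u a \<le> 1" if "a < k" for a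
    proof -
      have "pi_of k u a \<le> (\<Sum>a<k. pi_of k u a)" using that pos
        by (intro member_le_sum) (auto intro: less_imp_le)
      thus ?thesis using s by simp
    qed
    thus "\<forall>a<k. 0 < pi_of k u a \<and> pi_of k u a \<le> 1" using pos by auto
  qed
  have B: "(\<forall>a<k. \<forall>b<k. 0 \<le> P_of q a b \<and> P_of q a b \<le> 1 \<and> P_of q a b = P_of q b a)
      \<longleftrightarrow> (\<forall>p\<in>Qset k. 0 \<le> q p \<and> q p \<le> 1)"
  proof
    assume h: "\<forall>a<k. \<forall>b<k. 0 \<le> P_of q a b \<and> P_of q a b \<le> 1 \<and> P_of q a b = P_of q b a"
    show "\<forall>p\<in>Qset k. 0 \<le> q p \<and> q p \<le> 1"
    proof
      fix p assume p: "p \<in> Qset k"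
      hence "fst p < k" "snd p < k" by (auto simp: Qset_def)
      thus "0 \<le> q p \<and> q p \<le> 1" using h P_of_Q[OF p] by metis
    qed
  next
    assume h: "\<forall>p\<in>Qset k. 0 \<le> q p \<and> q p \<le> 1"
    show "\<forall>a<k. \<forall>b<k. 0 \<le> P_of q a b \<and> P_of q a b \<le> 1 \<and> P_of q a b = P_of q b a"
    proof (intro allI impI)
      fix a b assume ab: "a < k" "b < k"
      have "(min a b, max a b) \<in> Qset k" by (rule minmax_Q[OF ab])
      hence "0 \<le> q (min a b, max a b) \<and> q (min a b, max a b) \<le> 1" using h by blast
      thus "0 \<le> P_of q a b \<and> P_of q a b \<le> 1 \<and> P_of q a b = P_of q b a"
        by (simp add: P_of_def min.commute max.commute)
    qed
  qed
  show ?thesis unfolding Theta_def using A B s by auto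
qed

lemma prod_indicator_01:
  assumes "finite A"
  shows "(\<Prod>p\<in>A. indicator {0..1} (q p) :: real) = of_bool (\<forall>p\<in>A. 0 \<le> q p \<and> q p \<le> 1)"
proof (cases "\<forall>p\<in>A. 0 \<le> q p \<and> q p \<le> 1")
  case True
  thus ?thesis by (simp add: indicator_def)
next
  case False
  then obtain p where "p \<in> A" "\<not> (0 \<le> q p \<and> q p \<le> 1)" by blast
  thus ?thesis using assms False by (intro trans[OF prod_zero]) (auto simp: indicator_def intro!: bexI[of _ p])
qed

lemma ind_Theta:
  assumes "k \<ge> 1"
  shows "indicator (Theta k) (pi_of k u, P_of q) = of_bool (spx k u) * (\<Prod>p\<in>Qset k. indicator {0..1} (q p) :: real)"
  unfolding prod_indicator_01[OF finite_Qset] using Theta_iff[OF assms] by (simp add: indicator_def)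

lemma prior_split:
  "KT_prior k \<pi> (P_of q) = (Gamma (real k / 2) / Gamma (1/2) ^ k * (\<Prod>a<k. \<pi> a powr (-1/2))) *
      (\<Prod>p\<in>Qset k. 1 / Gamma (1/2) ^ 2 * q p powr (-1/2) * (1 - q p) powr (-1/2))"
proof -
  have "(\<Prod>(a,b)\<in>{(a,b). a \<le> b \<and> b < k}. 1 / Gamma (1/2) ^ 2 * P_of q a b powr (-1/2) * (1 - P_of q a b) powr (-1/2))
      = (\<Prod>p\<in>Qset k. 1 / Gamma (1/2) ^ 2 * q p powr (-1/2) * (1 - q p) powr (-1/2))"
    unfolding Qset_def[symmetric] by (intro prod.cong refl) (auto simp: P_of_def Qset_def min_def max_def)
  thus ?thesis unfolding KT_prior_def by simp
qed

lemma prob_split: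
  assumes adj: "adjacency n x"
  shows "prob_zx k n \<pi> (P_of q) z x = (\<Prod>a<k. \<pi> a ^ cnt n z a) *
     (\<Prod>p\<in>Qset k. rpow0 (q p) (real (e1 n z x p)) * rpow0 (1 - q p) (real (e2 n z x p)))"
proof -
  have "(\<Prod>a<k. \<Prod>b<k. rpow0 (P_of q a b) (real (Ocnt n z x a b) / 2) *
            rpow0 (1 - P_of q a b) ((real (npairs n z a b) - real (Ocnt n z x a b)) / 2))
       = (\<Prod>p\<in>Qset k. rpow0 (P_of q (fst p) (snd p)) (real (e1 n z x p)) *
            rpow0 (1 - P_of q (fst p) (snd p)) (real (e2 n z x p)))"
    by (rule regroup[OF adj]) (simp add: P_of_def min.commute max.commute)
  also have "\<dots> = (\<Prod>p\<in>Qset k. rpow0 (q p) (real (e1 n z x p)) * rpow0 (1 - q p) (real (e2 n z x p)))"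
    by (intro prod.cong refl) (simp add: P_of_Q)
  finally show ?thesis unfolding prob_zx_def by simp
qed

definition gfun :: "nat \<Rightarrow> nat \<Rightarrow> real \<Rightarrow> real" where
  "gfun e f t = indicator {0<..<1} t * t powr (real e + 1/2 - 1) * (1 - t) powr (real f + 1/2 - 1) / pi"

lemma pair_part:
  "indicator {0..1} t * (rpow0 t (real e) * rpow0 (1 - t) (real f)) *
     (1 / Gamma (1/2) ^ 2 * t powr (-1/2) * (1 - t) powr (-1/2)) = gfun e f t"
proof -
  consider "t < 0 \<or> t > 1" | "t = 0" | "t = 1" | "0 < t \<and> t < 1" by linarith
  thus ?thesis
  proof cases
    case 1 thus ?thesis by (auto simp: gfun_def indicator_def)
  next
    case 2 thus ?thesis by (simp add: gfun_def indicator_def)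
  next
    case 3 thus ?thesis by (simp add: gfun_def indicator_def)
  next
    case 4
    have a: "rpow0 t (real e) * t powr (-1/2) = t powr (real e + 1/2 - 1)"
      using 4 by (simp add: rpow0_def powr_add[symmetric])
    have b: "rpow0 (1 - t) (real f) * (1 - t) powr (-1/2) = (1 - t) powr (real f + 1/2 - 1)"
      using 4 by (simp add: rpow0_def powr_add[symmetric])
    have "indicator {0..1} t * (rpow0 t (real e) * rpow0 (1 - t) (real f)) *
     (1 / Gamma (1/2) ^ 2 * t powr (-1/2) * (1 - t) powr (-1/2))
      = (rpow0 t (real e) * t powr (-1/2)) * (rpow0 (1 - t) (real f) * (1 - t) powr (-1/2)) / pi"
      using 4 by (simp add: indicator_def Gamma_one_half_real)
    also have "\<dots> = gfun e f t" unfolding a b gfun_def using 4 by (simp add: indicator_def)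
    finally show ?thesis .
  qed
qed

lemma pi_part:
  assumes k: "k \<ge> 1"
  shows "of_bool (spx k u) * (\<Prod>a<k. pi_of k u a ^ c a * pi_of k u a powr (-1/2))
       = dirD (k-1) (\<lambda>j. real (c j) + 1/2) (real (c (k-1)) + 1/2) 1 u"
proof -
  obtain m where m: "k = Suc m" using k by (cases k) auto
  have km: "k - 1 = m" using m by simp
  have pl: "pi_of k u m = 1 - (\<Sum>j<m. u j)" by (simp add: pi_of_def m)
  have pj: "pi_of k u j = u j" if "j < m" for j using that by (simp add: pi_of_def m)
  have f: "y ^ N * y powr (-1/2) = indicator {0<..} y * y powr (real N + 1/2 - 1)" if "y > 0" for y :: real and N
    using that by (simp add: indicator_def powr_realpow[symmetric] powr_add[symmetric])
  have L: "(\<Prod>a<k. pi_of k u a ^ c a * pi_of k u a powr (-1/2))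
      = (\<Prod>j<m. u j ^ c j * u j powr (-1/2)) * ((1 - (\<Sum>j<m. u j)) ^ c m * (1 - (\<Sum>j<m. u j)) powr (-1/2))"
    unfolding m prod.lessThan_Suc using pj pl by (simp add: m[symmetric])
  show ?thesis
  proof (cases "spx k u")
    case True
    hence pos: "\<And>j. j < m \<Longrightarrow> u j > 0" "1 - (\<Sum>j<m. u j) > 0" by (auto simp: spx_def m)
    have "(\<Prod>j<m. u j ^ c j * u j powr (-1/2)) = (\<Prod>j<m. indicator {0<..} (u j) * u j powr (real (c j) + 1/2 - 1))"
      by (intro prod.cong refl f) (use pos in auto)
    moreover have "(1 - (\<Sum>j<m. u j)) ^ c m * (1 - (\<Sum>j<m. u j)) powr (-1/2)
      = indicator {0<..} (1 - (\<Sum>j<m. u j)) * (1 - (\<Sum>j<m. u j)) powr (real (c m) + 1/2 - 1)"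
      by (rule f) (use pos in auto)
    ultimately show ?thesis using True unfolding L dirD_def km by simp
  next
    case False
    hence "(\<exists>j<m. \<not> u j > 0) \<or> \<not> (1 - (\<Sum>j<m. u j) > 0)" by (auto simp: spx_def m)
    hence "dirD m (\<lambda>j. real (c j) + 1/2) (real (c m) + 1/2) 1 u = 0"
    proof
      assume "\<exists>j<m. \<not> u j > 0"
      then obtain j where j: "j < m" "\<not> u j > 0" by blast
      have "(\<Prod>j<m. indicator {0<..} (u j) * u j powr ((real (c j) + 1/2) - 1)) = (0::real)"
        using j by (intro prod_zero) (auto simp: indicator_def intro!: bexI[of _ j])
      thus ?thesis by (simp add: dirD_def)
    next
      assume "\<not> (1 - (\<Sum>j<m. u j) > 0)"
      thus ?thesis by (simp add: dirD_def indicator_def)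
    qed
    thus ?thesis using False km by simp
  qed
qed

definition Fz :: "nat \<Rightarrow> nat \<Rightarrow> (nat \<Rightarrow> nat) \<Rightarrow> (nat \<Rightarrow> real) \<Rightarrow> real" where
  "Fz k n z u = Gamma (real k / 2) / Gamma (1/2) ^ k *
     dirD (k-1) (\<lambda>j. real (cnt n z j) + 1/2) (real (cnt n z (k-1)) + 1/2) 1 u"

definition Gz :: "nat \<Rightarrow> nat \<Rightarrow> (nat \<Rightarrow> nat) \<Rightarrow> (nat \<Rightarrow> nat \<Rightarrow> bool) \<Rightarrow> (nat \<times> nat \<Rightarrow> real) \<Rightarrow> real" where
  "Gz k n z x q = (\<Prod>p\<in>Qset k. gfun (e1 n z x p) (e2 n z x p) (q p))"

lemma pointwise_z:
  assumes k: "k \<ge> 1" and adj: "adjacency n x"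
  shows "indicator (Theta k) (pi_of k u, P_of q) * prob_zx k n (pi_of k u) (P_of q) z x *
           KT_prior k (pi_of k u) (P_of q) = Fz k n z u * Gz k n z x q"
proof -
  define \<pi> where "\<pi> = pi_of k u"
  define c1 where "c1 = Gamma (real k / 2) / Gamma (1/2) ^ k"
  define ofb where "ofb = (of_bool (spx k u) :: real)"
  define PI where "PI = (\<Prod>p\<in>Qset k. indicator {0..1} (q p) :: real)"
  define Ppi where "Ppi = (\<Prod>a<k. \<pi> a ^ cnt n z a)"
  define Pq where "Pq = (\<Prod>p\<in>Qset k. rpow0 (q p) (real (e1 n z x p)) * rpow0 (1 - q p) (real (e2 n z x p)))"
  define Ppow where "Ppow = (\<Prod>a<k. \<pi> a powr (-1/2))"
  define Pr where "Pr = (\<Prod>p\<in>Qset k. 1 / Gamma (1/2) ^ 2 * q p powr (-1/2) * (1 - q p) powr (-1/2))"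
  have "indicator (Theta k) (pi_of k u, P_of q) * prob_zx k n (pi_of k u) (P_of q) z x *
           KT_prior k (pi_of k u) (P_of q) = (ofb * PI) * (Ppi * Pq) * (c1 * Ppow * Pr)"
    unfolding ind_Theta[OF k] prob_split[OF adj] prior_split ofb_def PI_def Ppi_def Pq_def c1_def Ppow_def Pr_def \<pi>_def
    by simp
  also have "\<dots> = c1 * (ofb * (Ppi * Ppow)) * (PI * Pq * Pr)" by (simp add: mult_ac)
  also have "ofb * (Ppi * Ppow) = dirD (k-1) (\<lambda>j. real (cnt n z j) + 1/2) (real (cnt n z (k-1)) + 1/2) 1 u"
    unfolding ofb_def Ppi_def Ppow_def prod.distrib[symmetric] \<pi>_def by (rule pi_part[OF k])
  also have "PI * Pq * Pr = Gz k n z x q"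
    unfolding PI_def Pq_def Pr_def Gz_def prod.distrib[symmetric] by (intro prod.cong refl pair_part)
  finally show ?thesis by (simp add: Fz_def c1_def)
qed

lemma gfun_nonneg: "gfun e f t \<ge> 0"
  by (simp add: gfun_def indicator_def)

lemma Gz_nonneg: "Gz k n z x q \<ge> 0"
  unfolding Gz_def by (intro prod_nonneg gfun_nonneg)

lemma Fz_nonneg: "k \<ge> 1 \<Longrightarrow> Fz k n z u \<ge> 0"
proof -
  assume k: "k \<ge> 1"
  have "Gamma (real k / 2) > 0" using k by (intro Gamma_real_pos) simp
  thus ?thesis unfolding Fz_def by (intro mult_nonneg_nonneg dirD_nonneg divide_nonneg_nonneg)
    (auto simp: Gamma_one_half_real)
qed

lemma gfun_meas: "(\<lambda>t. ennreal (gfun e f t)) \<in> borel_measurable lborel"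
  unfolding gfun_def by measurable

lemma Gz_meas: "(\<lambda>q. Gz k n z x q) \<in> borel_measurable (PiM (Qset k) (\<lambda>_. lborel))"
  unfolding Gz_def gfun_def by measurable

lemma Fz_meas: "(\<lambda>u. Fz k n z u) \<in> borel_measurable (PiM {..<k-1} (\<lambda>_. lborel))"
  unfolding Fz_def by (intro borel_measurable_times borel_measurable_const dirD_meas)

lemma int_gfun: "(\<integral>\<^sup>+ t. ennreal (gfun e f t) \<partial>lborel) = ennreal (Beta (real e + 1/2) (real f + 1/2) / pi)"
proof -
  have bu: "(\<integral>\<^sup>+ t. ennreal (indicator {0<..<1} t * t powr ((real e + 1/2) - 1) * (1 - t) powr ((real f + 1/2) - 1)) \<partial>lborel)
     = ennreal (Beta (real e + 1/2) (real f + 1/2))"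
    by (rule beta_unit) (auto simp: add_nonneg_pos)
  have B0: "Beta (real e + 1/2) (real f + 1/2) \<ge> 0"
    by (simp add: Beta_def Gamma_real_pos less_imp_le add_nonneg_pos)
  have "(\<integral>\<^sup>+ t. ennreal (gfun e f t) \<partial>lborel) =
     (\<integral>\<^sup>+ t. ennreal (1 / pi) * ennreal (indicator {0<..<1} t * t powr ((real e + 1/2) - 1) * (1 - t) powr ((real f + 1/2) - 1)) \<partial>lborel)"
    by (intro nn_integral_cong) (simp add: gfun_def ennreal_mult[symmetric] indicator_def)
  also have "\<dots> = ennreal (1 / pi) * (\<integral>\<^sup>+ t. ennreal (indicator {0<..<1} t * t powr ((real e + 1/2) - 1) * (1 - t) powr ((real f + 1/2) - 1)) \<partial>lborel)"
    by (rule nn_integral_cmult) measurable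
  also have "\<dots> = ennreal (1 / pi) * ennreal (Beta (real e + 1/2) (real f + 1/2))" unfolding bu ..
  also have "\<dots> = ennreal (1 / pi * Beta (real e + 1/2) (real f + 1/2))"
    using B0 by (intro ennreal_mult[symmetric]) auto
  finally show ?thesis by simp
qed

lemma int_Gz:
  "(\<integral>\<^sup>+ q. ennreal (Gz k n z x q) \<partial>PiM (Qset k) (\<lambda>_. lborel))
     = ennreal (\<Prod>p\<in>Qset k. Beta (real (e1 n z x p) + 1/2) (real (e2 n z x p) + 1/2) / pi)"
proof -
  interpret P: product_sigma_finite "\<lambda>_::nat\<times>nat. lborel :: real measure" by (rule psf_lborel)
  have "(\<integral>\<^sup>+ q. ennreal (Gz k n z x q) \<partial>PiM (Qset k) (\<lambda>_. lborel))
      = (\<integral>\<^sup>+ q. (\<Prod>p\<in>Qset k. ennreal (gfun (e1 n z x p) (e2 n z x p) (q p))) \<partial>PiM (Qset k) (\<lambda>_. lborel))"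
    unfolding Gz_def by (intro nn_integral_cong) (simp add: prod_ennreal gfun_nonneg)
  also have "\<dots> = (\<Prod>p\<in>Qset k. \<integral>\<^sup>+ t. ennreal (gfun (e1 n z x p) (e2 n z x p) t) \<partial>lborel)"
    by (rule P.product_nn_integral_prod[OF finite_Qset]) (rule gfun_meas)
  also have "\<dots> = (\<Prod>p\<in>Qset k. ennreal (Beta (real (e1 n z x p) + 1/2) (real (e2 n z x p) + 1/2) / pi))"
    by (simp add: int_gfun)
  also have "\<dots> = ennreal (\<Prod>p\<in>Qset k. Beta (real (e1 n z x p) + 1/2) (real (e2 n z x p) + 1/2) / pi)"
    by (rule prod_ennreal) (simp add: Beta_def Gamma_real_pos less_imp_le add_nonneg_pos)
  finally show ?thesis .
qed

definition Api :: "nat \<Rightarrow> nat \<Rightarrow> (nat \<Rightarrow> nat) \<Rightarrow> real" where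
  "Api k n z = Gamma (real k / 2) / Gamma (1/2) ^ k * (\<Prod>a<k. Gamma (real (cnt n z a) + 1/2)) / Gamma (real n + real k / 2)"

lemma int_Fz:
  assumes k: "k \<ge> 1" and z: "z \<in> {..<n} \<rightarrow>\<^sub>E {..<k}"
  shows "(\<integral>\<^sup>+ u. ennreal (Fz k n z u) \<partial>PiM {..<k-1} (\<lambda>_. lborel)) = ennreal (Api k n z)"
proof -
  obtain m where m: "k = Suc m" using k by (cases k) auto
  have km: "k - 1 = m" using m by simp
  define c1 where "c1 = Gamma (real k / 2) / Gamma (1/2) ^ k"
  have gk: "Gamma (real k / 2) > 0" using k by (intro Gamma_real_pos) simp
  have c1: "c1 \<ge> 0" unfolding c1_def using gk by (intro divide_nonneg_nonneg) (auto simp: Gamma_one_half_real)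
  define \<alpha> where "\<alpha> = (\<lambda>j. real (cnt n z j) + 1/2)"
  have "(\<integral>\<^sup>+ u. ennreal (Fz k n z u) \<partial>PiM {..<k-1} (\<lambda>_. lborel))
      = (\<integral>\<^sup>+ u. ennreal c1 * ennreal (dirD m \<alpha> (\<alpha> m) 1 u) \<partial>PiM {..<m} (\<lambda>_. lborel))"
    unfolding Fz_def km by (intro nn_integral_cong) (unfold c1_def \<alpha>_def, rule ennreal_mult[OF c1[unfolded c1_def] dirD_nonneg])
  also have "\<dots> = ennreal c1 * (\<integral>\<^sup>+ u. ennreal (dirD m \<alpha> (\<alpha> m) 1 u) \<partial>PiM {..<m} (\<lambda>_. lborel))"
    by (rule nn_integral_cmult) (auto intro: measurable_compose[OF dirD_meas])
  also have "(\<integral>\<^sup>+ u. ennreal (dirD m \<alpha> (\<alpha> m) 1 u) \<partial>PiM {..<m} (\<lambda>_. lborel))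
      = ennreal (1 powr ((\<Sum>j<m. \<alpha> j) + \<alpha> m - 1) * (\<Prod>j<m. Gamma (\<alpha> j)) * Gamma (\<alpha> m) / Gamma ((\<Sum>j<m. \<alpha> j) + \<alpha> m))"
    by (rule dirichlet) (auto simp: \<alpha>_def add_nonneg_pos)
  also have "1 powr ((\<Sum>j<m. \<alpha> j) + \<alpha> m - 1) * (\<Prod>j<m. Gamma (\<alpha> j)) * Gamma (\<alpha> m) / Gamma ((\<Sum>j<m. \<alpha> j) + \<alpha> m)
      = (\<Prod>a<k. Gamma (real (cnt n z a) + 1/2)) / Gamma (real n + real k / 2)"
  proof -
    have s: "(\<Sum>j<m. \<alpha> j) + \<alpha> m = real n + real k / 2"
    proof -
      have "(\<Sum>j<m. \<alpha> j) + \<alpha> m = (\<Sum>a<k. \<alpha> a)" unfolding m by simp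
      also have "\<dots> = (\<Sum>a<k. real (cnt n z a)) + real k / 2" unfolding \<alpha>_def by (simp add: sum.distrib)
      also have "(\<Sum>a<k. real (cnt n z a)) = real n" using cnt_sum[OF z] by (metis of_nat_sum)
      finally show ?thesis .
    qed
    have p: "(\<Prod>j<m. Gamma (\<alpha> j)) * Gamma (\<alpha> m) = (\<Prod>a<k. Gamma (real (cnt n z a) + 1/2))"
      unfolding m \<alpha>_def by simp
    show ?thesis unfolding s using p by simp
  qed
  finally have fin: "(\<integral>\<^sup>+ u. ennreal (Fz k n z u) \<partial>PiM {..<k-1} (\<lambda>_. lborel))
     = ennreal c1 * ennreal ((\<Prod>a<k. Gamma (real (cnt n z a) + 1/2)) / Gamma (real n + real k / 2))" .
  have v0: "(\<Prod>a<k. Gamma (real (cnt n z a) + 1/2)) / Gamma (real n + real k / 2) \<ge> 0"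
    using k by (intro divide_nonneg_nonneg prod_nonneg) (auto intro!: less_imp_le Gamma_real_pos add_nonneg_pos)
  have "Api k n z = c1 * ((\<Prod>a<k. Gamma (real (cnt n z a) + 1/2)) / Gamma (real n + real k / 2))"
    by (simp add: Api_def c1_def)
  thus ?thesis unfolding fin using ennreal_mult[OF c1 v0] by simp
qed


definition Kz :: "nat \<Rightarrow> nat \<Rightarrow> (nat \<Rightarrow> nat) \<Rightarrow> (nat \<Rightarrow> nat \<Rightarrow> bool) \<Rightarrow> real" where
  "Kz k n z x = Api k n z * (\<Prod>p\<in>Qset k. Beta (real (e1 n z x p) + 1/2) (real (e2 n z x p) + 1/2) / pi)"

lemma Beta_half_nonneg: "Beta (real a + 1/2) (real b + 1/2) / pi \<ge> 0"
  by (simp add: Beta_def Gamma_real_pos less_imp_le add_nonneg_pos)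

lemma Api_nonneg: "k \<ge> 1 \<Longrightarrow> Api k n z \<ge> 0"
proof -
  assume k: "k \<ge> 1"
  have "Gamma (real k / 2) > 0" using k by (intro Gamma_real_pos) simp
  moreover have "Gamma (real n + real k / 2) > 0" using k by (intro Gamma_real_pos add_nonneg_pos) auto
  moreover have "(\<Prod>a<k. Gamma (real (cnt n z a) + 1/2)) \<ge> 0"
    by (intro prod_nonneg) (auto intro!: less_imp_le Gamma_real_pos add_nonneg_pos)
  ultimately show ?thesis unfolding Api_def
    by (intro divide_nonneg_pos mult_nonneg_nonneg divide_nonneg_nonneg) (auto simp: Gamma_one_half_real)
qed

lemma Kz_nonneg: "k \<ge> 1 \<Longrightarrow> Kz k n z x \<ge> 0"
  unfolding Kz_def by (intro mult_nonneg_nonneg Api_nonneg prod_nonneg Beta_half_nonneg)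

lemma int_pair:
  assumes k: "k \<ge> 1" and z: "z \<in> {..<n} \<rightarrow>\<^sub>E {..<k}"
  shows "(\<integral>\<^sup>+ w. ennreal (Fz k n z (fst w) * Gz k n z x (snd w))
           \<partial>(PiM {..<k-1} (\<lambda>_. lborel) \<Otimes>\<^sub>M PiM (Qset k) (\<lambda>_. lborel))) = ennreal (Kz k n z x)"
proof -
  interpret P2: product_sigma_finite "\<lambda>_::nat\<times>nat. lborel :: real measure" by (rule psf_lborel)
  have sf: "sigma_finite_measure (PiM (Qset k) (\<lambda>_::nat\<times>nat. lborel :: real measure))"
    by (rule P2.sigma_finite[OF finite_Qset])
  have meas: "(\<lambda>w. ennreal (Fz k n z (fst w) * Gz k n z x (snd w)))
      \<in> borel_measurable (PiM {..<k-1} (\<lambda>_. lborel) \<Otimes>\<^sub>M PiM (Qset k) (\<lambda>_. lborel))"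
    using Fz_meas Gz_meas by measurable
  have "(\<integral>\<^sup>+ w. ennreal (Fz k n z (fst w) * Gz k n z x (snd w))
           \<partial>(PiM {..<k-1} (\<lambda>_. lborel) \<Otimes>\<^sub>M PiM (Qset k) (\<lambda>_. lborel)))
     = (\<integral>\<^sup>+ u. \<integral>\<^sup>+ q. ennreal (Fz k n z u * Gz k n z x q) \<partial>PiM (Qset k) (\<lambda>_. lborel) \<partial>PiM {..<k-1} (\<lambda>_. lborel))"
    using sigma_finite_measure.nn_integral_fst[OF sf meas] by simp
  also have "\<dots> = (\<integral>\<^sup>+ u. ennreal (Fz k n z u) * ennreal (\<Prod>p\<in>Qset k. Beta (real (e1 n z x p) + 1/2) (real (e2 n z x p) + 1/2) / pi) \<partial>PiM {..<k-1} (\<lambda>_. lborel))"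
  proof (intro nn_integral_cong)
    fix u
    have "(\<integral>\<^sup>+ q. ennreal (Fz k n z u * Gz k n z x q) \<partial>PiM (Qset k) (\<lambda>_. lborel))
        = (\<integral>\<^sup>+ q. ennreal (Fz k n z u) * ennreal (Gz k n z x q) \<partial>PiM (Qset k) (\<lambda>_. lborel))"
      by (intro nn_integral_cong ennreal_mult Fz_nonneg[OF k] Gz_nonneg)
    also have "\<dots> = ennreal (Fz k n z u) * (\<integral>\<^sup>+ q. ennreal (Gz k n z x q) \<partial>PiM (Qset k) (\<lambda>_. lborel))"
      by (rule nn_integral_cmult) (use Gz_meas in measurable)
    finally show "(\<integral>\<^sup>+ q. ennreal (Fz k n z u * Gz k n z x q) \<partial>PiM (Qset k) (\<lambda>_. lborel))
        = ennreal (Fz k n z u) * ennreal (\<Prod>p\<in>Qset k. Beta (real (e1 n z x p) + 1/2) (real (e2 n z x p) + 1/2) / pi)"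
      unfolding int_Gz .
  qed
  also have "\<dots> = (\<integral>\<^sup>+ u. ennreal (Fz k n z u) \<partial>PiM {..<k-1} (\<lambda>_. lborel)) *
        ennreal (\<Prod>p\<in>Qset k. Beta (real (e1 n z x p) + 1/2) (real (e2 n z x p) + 1/2) / pi)"
    by (rule nn_integral_multc) (use Fz_meas in measurable)
  also have "\<dots> = ennreal (Api k n z) * ennreal (\<Prod>p\<in>Qset k. Beta (real (e1 n z x p) + 1/2) (real (e2 n z x p) + 1/2) / pi)"
    unfolding int_Fz[OF k z] ..
  also have "\<dots> = ennreal (Kz k n z x)"
    unfolding Kz_def by (rule ennreal_mult[symmetric]) (intro Api_nonneg[OF k], intro prod_nonneg Beta_half_nonneg)
  finally show ?thesis .
qed

lemma KT_eq:
  assumes k: "k \<ge> 1" and adj: "adjacency n x"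
  shows "KT k n x = (\<Sum>z\<in>{..<n} \<rightarrow>\<^sub>E {..<k}. Kz k n z x)"
proof -
  define Z where "Z = {..<n} \<rightarrow>\<^sub>E {..<k}"
  have finZ: "finite Z" unfolding Z_def by (intro finite_PiE) auto
  have Q: "{(a,b). a \<le> b \<and> b < k} = Qset k" by (simp add: Qset_def)
  have pw: "ennreal (indicator (Theta k) (pi_of k (fst w), P_of (snd w)) *
               prob_x k n (pi_of k (fst w)) (P_of (snd w)) x *
               KT_prior k (pi_of k (fst w)) (P_of (snd w)))
       = (\<Sum>z\<in>Z. ennreal (Fz k n z (fst w) * Gz k n z x (snd w)))" for w
  proof -
    have "indicator (Theta k) (pi_of k (fst w), P_of (snd w)) *
               prob_x k n (pi_of k (fst w)) (P_of (snd w)) x *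
               KT_prior k (pi_of k (fst w)) (P_of (snd w))
        = (\<Sum>z\<in>Z. indicator (Theta k) (pi_of k (fst w), P_of (snd w)) *
               prob_zx k n (pi_of k (fst w)) (P_of (snd w)) z x *
               KT_prior k (pi_of k (fst w)) (P_of (snd w)))"
      unfolding prob_x_def Z_def[symmetric] by (simp add: sum_distrib_left sum_distrib_right)
    also have "\<dots> = (\<Sum>z\<in>Z. Fz k n z (fst w) * Gz k n z x (snd w))"
      by (intro sum.cong refl pointwise_z[OF k adj])
    finally show ?thesis
      by (simp add: sum_ennreal mult_nonneg_nonneg Fz_nonneg[OF k] Gz_nonneg)
  qed
  have "(\<integral>\<^sup>+ w. ennreal (indicator (Theta k) (pi_of k (fst w), P_of (snd w)) *
               prob_x k n (pi_of k (fst w)) (P_of (snd w)) x *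
               KT_prior k (pi_of k (fst w)) (P_of (snd w)))
      \<partial>(PiM {..<k - 1} (\<lambda>_. lborel) \<Otimes>\<^sub>M PiM {(a,b). a \<le> b \<and> b < k} (\<lambda>_. lborel)))
     = (\<integral>\<^sup>+ w. (\<Sum>z\<in>Z. ennreal (Fz k n z (fst w) * Gz k n z x (snd w)))
      \<partial>(PiM {..<k - 1} (\<lambda>_. lborel) \<Otimes>\<^sub>M PiM (Qset k) (\<lambda>_. lborel)))"
    unfolding Q pw ..
  also have "\<dots> = (\<Sum>z\<in>Z. \<integral>\<^sup>+ w. ennreal (Fz k n z (fst w) * Gz k n z x (snd w))
      \<partial>(PiM {..<k - 1} (\<lambda>_. lborel) \<Otimes>\<^sub>M PiM (Qset k) (\<lambda>_. lborel)))"
    by (rule nn_integral_sum) (use Fz_meas Gz_meas in measurable)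
  also have "\<dots> = (\<Sum>z\<in>Z. ennreal (Kz k n z x))"
    by (intro sum.cong refl int_pair[OF k]) (simp add: Z_def)
  also have "\<dots> = ennreal (\<Sum>z\<in>Z. Kz k n z x)"
    by (rule sum_ennreal) (rule Kz_nonneg[OF k])
  finally show ?thesis unfolding KT_def Z_def
    by (simp add: sum_nonneg Kz_nonneg[OF k])
qed


definition Mq :: "nat \<Rightarrow> nat \<Rightarrow> real" where
  "Mq a b = (real a / real (a + b)) ^ a * (real b / real (a + b)) ^ b"

definition Mz :: "nat \<Rightarrow> nat \<Rightarrow> (nat \<Rightarrow> nat) \<Rightarrow> (nat \<Rightarrow> nat \<Rightarrow> bool) \<Rightarrow> real" where
  "Mz k n z x = (\<Prod>a<k. (real (cnt n z a) / real n) ^ cnt n z a) * (\<Prod>p\<in>Qset k. Mq (e1 n z x p) (e2 n z x p))"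

lemma two_gibbs:
  fixes y :: real assumes "0 \<le> y" "y \<le> 1"
  shows "y ^ a * (1 - y) ^ b \<le> Mq a b"
proof -
  define w where "w i = (if i = (0::nat) then a else b)" for i
  define p where "p i = (if i = (0::nat) then y else 1 - y)" for i
  have "(\<Prod>i\<in>{0,1}. p i ^ w i) \<le> (\<Prod>i\<in>{0,1}. (real (w i) / real (\<Sum>j\<in>{0,1}. w j)) ^ w i)"
    by (rule gibbs) (use assms in \<open>auto simp: p_def\<close>)
  thus ?thesis by (simp add: p_def w_def Mq_def)
qed

lemma Mq_nonneg: "Mq a b \<ge> 0" by (simp add: Mq_def)

lemma theta_bound:
  assumes k: "k \<ge> 1" and adj: "adjacency n x" and z: "z \<in> {..<n} \<rightarrow>\<^sub>E {..<k}"
    and th: "(\<pi>, P) \<in> Theta k"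
  shows "prob_zx k n \<pi> P z x \<le> Mz k n z x"
proof -
  from th have pi: "\<And>a. a < k \<Longrightarrow> 0 < \<pi> a \<and> \<pi> a \<le> 1" and ps: "(\<Sum>a<k. \<pi> a) = 1"
    and PP: "\<And>a b. a < k \<Longrightarrow> b < k \<Longrightarrow> 0 \<le> P a b \<and> P a b \<le> 1 \<and> P a b = P b a"
    unfolding Theta_def by auto
  have reg: "(\<Prod>a<k. \<Prod>b<k. rpow0 (P a b) (real (Ocnt n z x a b) / 2) *
            rpow0 (1 - P a b) ((real (npairs n z a b) - real (Ocnt n z x a b)) / 2))
       = (\<Prod>p\<in>Qset k. rpow0 (P (fst p) (snd p)) (real (e1 n z x p)) *
            rpow0 (1 - P (fst p) (snd p)) (real (e2 n z x p)))"
    by (rule regroup[OF adj]) (use PP in auto)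
  have b1: "(\<Prod>a<k. \<pi> a ^ cnt n z a) \<le> (\<Prod>a<k. (real (cnt n z a) / real n) ^ cnt n z a)"
  proof -
    have "(\<Prod>a<k. \<pi> a ^ cnt n z a) \<le> (\<Prod>a<k. (real (cnt n z a) / real (\<Sum>j<k. cnt n z j)) ^ cnt n z a)"
      by (rule gibbs) (use pi ps in \<open>auto intro: less_imp_le\<close>)
    thus ?thesis using cnt_sum[OF z] by simp
  qed
  have b2: "(\<Prod>p\<in>Qset k. rpow0 (P (fst p) (snd p)) (real (e1 n z x p)) *
            rpow0 (1 - P (fst p) (snd p)) (real (e2 n z x p))) \<le> (\<Prod>p\<in>Qset k. Mq (e1 n z x p) (e2 n z x p))"
  proof (rule prod_mono, rule conjI)
    fix p assume p: "p \<in> Qset k"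
    hence "fst p < k" "snd p < k" by (auto simp: Qset_def)
    hence y: "0 \<le> P (fst p) (snd p)" "P (fst p) (snd p) \<le> 1" using PP by auto
    show "0 \<le> rpow0 (P (fst p) (snd p)) (real (e1 n z x p)) * rpow0 (1 - P (fst p) (snd p)) (real (e2 n z x p))"
      by (intro mult_nonneg_nonneg rpow0_nonneg)
    show "rpow0 (P (fst p) (snd p)) (real (e1 n z x p)) * rpow0 (1 - P (fst p) (snd p)) (real (e2 n z x p))
        \<le> Mq (e1 n z x p) (e2 n z x p)"
      using y by (simp add: rpow0_nat two_gibbs)
  qed
  have "prob_zx k n \<pi> P z x = (\<Prod>a<k. \<pi> a ^ cnt n z a) * (\<Prod>p\<in>Qset k. rpow0 (P (fst p) (snd p)) (real (e1 n z x p)) *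
            rpow0 (1 - P (fst p) (snd p)) (real (e2 n z x p)))"
    unfolding prob_zx_def reg ..
  also have "\<dots> \<le> Mz k n z x"
    unfolding Mz_def using b1 b2 pi
    by (intro mult_mono prod_nonneg) (auto intro!: prod_nonneg mult_nonneg_nonneg rpow0_nonneg Mq_nonneg)
  finally show ?thesis .
qed


definition Rb :: "nat \<Rightarrow> nat \<Rightarrow> real" where
  "Rb k n = exp ((real (k * (k + 2)) / 2 - 1/2) * ln (real n) + c_const k n)"

lemma Mz_le:
  assumes k: "k \<ge> 1" and n: "n \<ge> 1" and adj: "adjacency n x" and z: "z \<in> {..<n} \<rightarrow>\<^sub>E {..<k}"
  shows "Mz k n z x \<le> Rb k n * Kz k n z x"
proof -
  define D where "D = exp (1 + real k * (real k - 1) / (4 * real n)) * real n powr ((real k - 1) / 2) / Gamma (real k / 2)"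
  define Bq where "Bq p = Beta (real (e1 n z x p) + 1/2) (real (e2 n z x p) + 1/2) / pi" for p
  have gk: "Gamma (real k / 2) > 0" using k by (intro Gamma_real_pos) simp
  have D0: "D \<ge> 0" unfolding D_def using gk by simp
  have m1: "(\<Prod>a<k. (real (cnt n z a) / real n) ^ cnt n z a) \<le> D * Api k n z"
    unfolding D_def Api_def by (rule pi_bound[OF n k cnt_sum[OF z]])
  have m2: "(\<Prod>p\<in>Qset k. Mq (e1 n z x p) (e2 n z x p)) \<le> (\<Prod>p\<in>Qset k. (exp 1 * real n) * Bq p)"
  proof (rule prod_mono, rule conjI)
    fix p assume p: "p \<in> Qset k"
    show "0 \<le> Mq (e1 n z x p) (e2 n z x p)" by (rule Mq_nonneg)
    show "Mq (e1 n z x p) (e2 n z x p) \<le> exp 1 * real n * Bq p"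
      unfolding Mq_def Bq_def by (rule pair_bound[OF n X12_nat(3)[OF adj p]])
  qed
  have m2': "(\<Prod>p\<in>Qset k. (exp 1 * real n) * Bq p) = (exp 1 * real n) ^ card (Qset k) * (\<Prod>p\<in>Qset k. Bq p)"
    by (simp add: prod.distrib)
  have Mpi0: "0 \<le> (\<Prod>a<k. (real (cnt n z a) / real n) ^ cnt n z a)" by (intro prod_nonneg) auto
  have B0: "0 \<le> (\<Prod>p\<in>Qset k. Bq p)" unfolding Bq_def by (intro prod_nonneg Beta_half_nonneg)
  have "Mz k n z x \<le> (D * Api k n z) * ((exp 1 * real n) ^ card (Qset k) * (\<Prod>p\<in>Qset k. Bq p))"
    unfolding Mz_def m2'[symmetric]
    by (rule mult_mono[OF m1 m2 _ prod_nonneg]) (use D0 Api_nonneg[OF k] in \<open>auto intro: Mq_nonneg\<close>)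
  also have "\<dots> = (D * (exp 1 * real n) ^ card (Qset k)) * Kz k n z x"
    unfolding Kz_def Bq_def by (simp add: mult_ac)
  also have "\<dots> \<le> Rb k n * Kz k n z x"
  proof (rule mult_right_mono)
    show "0 \<le> Kz k n z x" by (rule Kz_nonneg[OF k])
    show "D * (exp 1 * real n) ^ card (Qset k) \<le> Rb k n"
      unfolding D_def Rb_def by (rule const_bound[OF k n card_Qset])
  qed
  finally show ?thesis .
qed


lemma prob_zx_pos:
  assumes k: "k \<ge> 1"
  shows "prob_zx k n (\<lambda>a. 1 / real k) (\<lambda>a b. 1/2) z x > 0"
proof -
  have a: "(\<Prod>a<k. (1 / real k) ^ cnt n z a) > 0" using k by (intro prod_pos) auto
  have b: "(\<Prod>a<k. \<Prod>b<k. rpow0 (1/2) (real (Ocnt n z x a b) / 2) *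
        rpow0 (1 - 1/2) ((real (npairs n z a b) - real (Ocnt n z x a b)) / 2)) > 0"
    by (intro prod_pos mult_pos_pos) (auto simp: rpow0_def)
  show ?thesis unfolding prob_zx_def using a b by simp
qed

theorem proposition1:
  fixes k n :: nat and x :: "nat \<Rightarrow> nat \<Rightarrow> bool"
  assumes "k \<ge> 1" and "n \<ge> max 4 k" and "adjacency n x"
  shows "ln (MaxLik k n x / KT k n x)
           \<le> (real (k * (k + 2)) / 2 - 1/2) * ln (real n) + c_const k n"
proof -
  have k: "k \<ge> 1" using assms(1) .
  have n: "n \<ge> 1" using assms(2) by simp
  have adj: "adjacency n x" using assms(3) .
  define Z where "Z = {..<n} \<rightarrow>\<^sub>E {..<k}"
  have finZ: "finite Z" unfolding Z_def by (intro finite_PiE) auto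
  have z0: "restrict (\<lambda>_. 0) {..<n} \<in> Z" unfolding Z_def using k by auto
  hence Zne: "Z \<noteq> {}" by auto
  have KT: "KT k n x = (\<Sum>z\<in>Z. Kz k n z x)" unfolding Z_def by (rule KT_eq[OF k adj])
  have bound: "prob_x k n \<pi> P x \<le> Rb k n * KT k n x" if th: "(\<pi>, P) \<in> Theta k" for \<pi> P
  proof -
    have "prob_x k n \<pi> P x = (\<Sum>z\<in>Z. prob_zx k n \<pi> P z x)" unfolding prob_x_def Z_def ..
    also have "\<dots> \<le> (\<Sum>z\<in>Z. Mz k n z x)"
      by (intro sum_mono theta_bound[OF k adj _ th]) (simp add: Z_def)
    also have "\<dots> \<le> (\<Sum>z\<in>Z. Rb k n * Kz k n z x)"
      by (intro sum_mono Mz_le[OF k n adj]) (simp add: Z_def)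
    also have "\<dots> = Rb k n * KT k n x" unfolding KT by (simp add: sum_distrib_left)
    finally show ?thesis .
  qed
  define thpi where "thpi = (\<lambda>a::nat. 1 / real k)"
  define thP where "thP = (\<lambda>(a::nat) (b::nat). (1::real)/2)"
  have th0: "(thpi, thP) \<in> Theta k"
    unfolding Theta_def thpi_def thP_def using k by auto
  have p0: "prob_x k n thpi thP x > 0"
    unfolding prob_x_def Z_def[symmetric] thpi_def thP_def
    using finZ Zne prob_zx_pos[OF k] by (intro sum_pos) auto
  define S where "S = {prob_x k n \<pi> P x | \<pi> P. (\<pi>, P) \<in> Theta k}"
  have Sne: "S \<noteq> {}" and p0S: "prob_x k n thpi thP x \<in> S" using th0 by (auto simp: S_def)
  have Sub: "\<And>s. s \<in> S \<Longrightarrow> s \<le> Rb k n * KT k n x" using bound by (auto simp: S_def)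
  have mleq: "MaxLik k n x = Sup S" by (simp add: MaxLik_def S_def)
  have mle: "MaxLik k n x \<le> Rb k n * KT k n x" unfolding mleq by (rule cSup_least[OF Sne Sub])
  have bdd: "bdd_above S" by (rule bdd_aboveI[of _ "Rb k n * KT k n x"]) (rule Sub)
  have mpos: "MaxLik k n x > 0"
  proof -
    have "prob_x k n thpi thP x \<le> Sup S" by (rule cSup_upper[OF p0S bdd])
    thus ?thesis using p0 mleq by simp
  qed
  have Rpos: "Rb k n > 0" by (simp add: Rb_def)
  have KTpos: "KT k n x > 0"
  proof (rule ccontr)
    assume "\<not> KT k n x > 0"
    hence "Rb k n * KT k n x \<le> 0" using Rpos by (simp add: mult_nonneg_nonpos)
    thus False using mle mpos by linarith
  qed
  have r_pos: "MaxLik k n x / KT k n x > 0" using mpos KTpos by simp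
  have r_le: "MaxLik k n x / KT k n x \<le> Rb k n" using mle KTpos by (simp add: pos_divide_le_eq)
  have "ln (MaxLik k n x / KT k n x) \<le> ln (Rb k n)" using r_pos r_le by simp
  also have "ln (Rb k n) = (real (k * (k + 2)) / 2 - 1/2) * ln (real n) + c_const k n"
    by (simp add: Rb_def)
  finally show ?thesis .
qed


end
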